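(* Let $d=2$ and $E\subset[1,2]$ with $\dim_{\mathrm{M}}E=\beta$. Then, for $1\le p\le q\le\infty$ satisfying $\frac1p-\frac{1-\beta}{q}-\frac12<0$, there is $C$ such that $\|R_{i,E}f_0\|_{L^q(\mu_2)}\le C\|f_0\|_{L^p(\mu_2)}$ for all $f_0$ and $i=1,2$, where $$R_{1,E}f_0(r)=\chi_{[2,\infty)}(r)\sup_{t\in E,\ t\le r/2}\int_{r-t}^{r}(s-r+t)^{-1/2}|f_0(s)|\,ds,$$ $$R_{2,E}f_0(r)=\chi_{[2,\infty)}(r)\sup_{t\in E,\ t\le r/2}\int_{r}^{r+t}(r+t-s)^{-1/2}|f_0(s)|\,ds.$$
   Context: $\mu_2$ is the measure $r\,dr$ on $\mathbb{R}^+$. $N(E,\delta)$ is the minimal number of intervals of length $\delta$ covering $E$, and $\dim_{\mathrm M}E=\inf\{a>0:\exists c,\ N(E,\delta)\le c\delta^{-a}\ \forall\delta\in(0,1)\}$. *)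

theory Defs
  imports "HOL-Analysis.Analysis" "HOL-Probability.Essential_Supremum"
begin

definition cover_num :: "real set \<Rightarrow> real \<Rightarrow> nat" where
  "cover_num E \<delta> = (LEAST n. \<exists>a::nat \<Rightarrow> real. E \<subseteq> (\<Union>i<n. {a i .. a i + \<delta>}))"

definition minkowski_dim :: "real set \<Rightarrow> real" where
  "minkowski_dim E = Inf {a. a > 0 \<and> (\<exists>c::real. \<forall>\<delta>\<in>{0<..<1}. real (cover_num E \<delta>) \<le> c * \<delta> powr (-a))}"

definition mu2 :: "real measure" where
  "mu2 = density lborel (\<lambda>r. ennreal r * indicator {0<..} r)"

definition enn_powr :: "ennreal \<Rightarrow> real \<Rightarrow> ennreal" where
  "enn_powr x a = (if x = \<infinity> then \<infinity> else ennreal (enn2real x powr a))"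

definition Lp_norm :: "'a measure \<Rightarrow> ennreal \<Rightarrow> ('a \<Rightarrow> ennreal) \<Rightarrow> ennreal" where
  "Lp_norm M p g = (if p = \<infinity> then esssup M g
     else enn_powr (\<integral>\<^sup>+ x. enn_powr (g x) (enn2real p) \<partial>M) (1 / enn2real p))"

definition recip_exp :: "ennreal \<Rightarrow> real" where
  "recip_exp p = (if p = \<infinity> then 0 else 1 / enn2real p)"

definition R1 :: "real set \<Rightarrow> (real \<Rightarrow> real) \<Rightarrow> real \<Rightarrow> ennreal" where
  "R1 E f r = indicator {2..} r *
     (SUP t\<in>{t\<in>E. t \<le> r / 2}. \<integral>\<^sup>+ s. ennreal (indicator {r - t .. r} s * (s - r + t) powr (-1/2) * \<bar>f s\<bar>) \<partial>lborel)"

definition R2 :: "real set \<Rightarrow> (real \<Rightarrow> real) \<Rightarrow> real \<Rightarrow> ennreal" where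
  "R2 E f r = indicator {2..} r *
     (SUP t\<in>{t\<in>E. t \<le> r / 2}. \<integral>\<^sup>+ s. ennreal (indicator {r .. r + t} s * (r + t - s) powr (-1/2) * \<bar>f s\<bar>) \<partial>lborel)"

end

theory Submission
  imports Defs
begin

lemma enn_powr_ennreal: "0 \<le> x \<Longrightarrow> enn_powr (ennreal x) a = ennreal (x powr a)"
  by (simp add: enn_powr_def)

lemma enn_powr_top[simp]: "enn_powr top a = top"
  by (simp add: enn_powr_def)

lemma enn_powr_zero[simp]: "enn_powr 0 a = 0"
  by (simp add: enn_powr_def)

lemma enn_powr_mono:
  assumes "0 < a" "x \<le> y" shows "enn_powr x a \<le> enn_powr y a"
proof (cases "y = \<infinity>")
  case True then show ?thesis by simp
next
  case False
  then obtain y' where y: "y = ennreal y'" "0 \<le> y'" by (cases y) auto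
  with assms obtain x' where x: "x = ennreal x'" "0 \<le> x'" "x' \<le> y'"
    by (cases x) (auto simp: ennreal_le_iff2 top_unique)
  show ?thesis using x y assms by (simp add: enn_powr_ennreal powr_mono2)
qed

lemma enn_powr_cmult:
  assumes "0 < a" "0 \<le> c" shows "enn_powr (ennreal c * x) a = ennreal (c powr a) * enn_powr x a"
proof (cases "x = \<infinity>")
  case True
  show ?thesis
  proof (cases "c = 0")
    case True then show ?thesis using \<open>x = \<infinity>\<close> by simp
  next
    case False then show ?thesis using \<open>x = \<infinity>\<close> assms by (simp add: ennreal_mult_top)
  qed
next
  case False
  then obtain x' where x: "x = ennreal x'" "0 \<le> x'" by (cases x) auto
  show ?thesis using x assms
    by (simp add: enn_powr_ennreal flip: ennreal_mult) (simp add: powr_mult ennreal_mult)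
qed

lemma enn_powr_inv:
  assumes "0 < a" shows "enn_powr (enn_powr x a) (1/a) = x"
proof (cases "x = \<infinity>")
  case True then show ?thesis by simp
next
  case False
  then obtain x' where x: "x = ennreal x'" "0 \<le> x'" by (cases x) auto
  show ?thesis using x assms by (simp add: enn_powr_ennreal powr_powr)
qed

lemma tangent_ineq:
  fixes p m x :: real
  assumes "1 \<le> p" "0 < m" "0 \<le> x"
  shows "p * m powr (p - 1) * x \<le> x powr p + (p - 1) * m powr p"
proof (cases "p = 1")
  case True then show ?thesis using assms by simp
next
  case False
  then have p1: "p > 1" using assms by simp
  define q where "q = p / (p - 1)"
  have q1: "q > 1" using p1 by (simp add: q_def)
  have pq: "1/p + 1/q = 1" using p1 by (simp add: q_def field_simps)
  have "x * m powr (p - 1) \<le> x powr p / p + (m powr (p - 1)) powr q / q"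
    by (rule Youngs_inequality) (use p1 q1 pq assms in auto)
  also have "(m powr (p - 1)) powr q = m powr p"
    using p1 by (simp add: powr_powr q_def)
  finally have "x * m powr (p - 1) \<le> x powr p / p + m powr p / q" .
  then have "p * (x * m powr (p - 1)) \<le> p * (x powr p / p + m powr p / q)"
    using p1 by simp
  also have "\<dots> = x powr p + (p - 1) * m powr p"
    using p1 by (simp add: q_def field_simps)
  finally show ?thesis by (simp add: mult_ac)
qed

lemma jensen_interval:
  fixes F :: "real \<Rightarrow> real" and x \<rho> p :: real
  assumes Fm[measurable]: "F \<in> borel_measurable borel" and F0: "\<And>s. 0 \<le> F s"
    and p: "1 \<le> p" and \<rho>: "0 < \<rho>"
    and H: "(\<integral>\<^sup>+ s. ennreal (indicator {x-\<rho>..x+\<rho>} s * F s powr p) \<partial>lborel) < \<infinity>"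
  shows "(\<integral>\<^sup>+ s. ennreal (indicator {x-\<rho>..x+\<rho>} s * F s) \<partial>lborel) < \<infinity>"
    and "enn2real (\<integral>\<^sup>+ s. ennreal (indicator {x-\<rho>..x+\<rho>} s * F s) \<partial>lborel) powr p
          \<le> (2*\<rho>) powr (p - 1) * enn2real (\<integral>\<^sup>+ s. ennreal (indicator {x-\<rho>..x+\<rho>} s * F s powr p) \<partial>lborel)"
proof -
  define I where "I = {x-\<rho>..x+\<rho>}"
  define G where "G = (\<integral>\<^sup>+ s. ennreal (indicator I s * F s) \<partial>lborel)"
  define Hp where "Hp = (\<integral>\<^sup>+ s. ennreal (indicator I s * F s powr p) \<partial>lborel)"
  have Im[measurable]: "I \<in> sets borel" by (simp add: I_def)
  have HI: "Hp < \<infinity>" using H by (simp add: Hp_def I_def)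
  have lenI: "(\<integral>\<^sup>+ s. ennreal (indicator I s) \<partial>lborel) = ennreal (2*\<rho>)"
    using \<rho> by (simp add: I_def ennreal_indicator)
  have "G \<le> (\<integral>\<^sup>+ s. ennreal (indicator I s) + ennreal (indicator I s * F s powr p) \<partial>lborel)"
    unfolding G_def
  proof (rule nn_integral_mono)
    fix s
    have "F s \<le> 1 + F s powr p"
    proof (cases "F s \<le> 1")
      case True then show ?thesis using F0[of s] powr_ge_zero[of "F s" p] by linarith
    next
      case False
      then have "F s powr 1 \<le> F s powr p" using p by (intro powr_mono) auto
      then show ?thesis using False by simp
    qed
    then show "ennreal (indicator I s * F s) \<le> ennreal (indicator I s) + ennreal (indicator I s * F s powr p)"
      by (auto simp: indicator_def simp flip: ennreal_plus intro!: ennreal_leI)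
  qed
  also have "\<dots> = ennreal (2*\<rho>) + Hp"
    by (subst nn_integral_add) (auto simp: lenI[unfolded I_def] Hp_def I_def)
  finally have GI: "G < \<infinity>" using HI by (metis ennreal_add_less_top ennreal_less_top infinity_ennreal_def order.strict_trans1)
  then show "(\<integral>\<^sup>+ s. ennreal (indicator {x-\<rho>..x+\<rho>} s * F s) \<partial>lborel) < \<infinity>"
    by (simp add: G_def I_def)
  define \<gamma> where "\<gamma> = enn2real G"
  define h where "h = enn2real Hp"
  have G\<gamma>: "G = ennreal \<gamma>" and \<gamma>0: "0 \<le> \<gamma>" using GI by (auto simp: \<gamma>_def less_top)
  have Hh: "Hp = ennreal h" and h0: "0 \<le> h" using HI by (auto simp: h_def less_top)
  have "\<gamma> powr p \<le> (2*\<rho>) powr (p - 1) * h"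
  proof (cases "\<gamma> = 0")
    case True then show ?thesis using h0 \<rho> by simp
  next
    case False
    define m where "m = \<gamma> / (2*\<rho>)"
    have m0: "0 < m" using False \<gamma>0 \<rho> by (simp add: m_def)
    have "ennreal (p * m powr (p-1)) * G = (\<integral>\<^sup>+ s. ennreal (p * m powr (p-1)) * ennreal (indicator I s * F s) \<partial>lborel)"
      unfolding G_def by (rule nn_integral_cmult[symmetric]) simp
    also have "\<dots> = (\<integral>\<^sup>+ s. ennreal (indicator I s * (p * m powr (p-1) * F s)) \<partial>lborel)"
    proof (rule nn_integral_cong)
      fix s
      have "ennreal (p * m powr (p-1)) * ennreal (indicator I s * F s) = ennreal (p * m powr (p-1) * (indicator I s * F s))"
        using p F0[of s] by (intro ennreal_mult[symmetric]) auto
      also have "p * m powr (p-1) * (indicator I s * F s) = indicator I s * (p * m powr (p-1) * F s)"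
        by simp
      finally show "ennreal (p * m powr (p-1)) * ennreal (indicator I s * F s) = ennreal (indicator I s * (p * m powr (p-1) * F s))" .
    qed
    also have "\<dots> \<le> (\<integral>\<^sup>+ s. ennreal (indicator I s * F s powr p) + ennreal ((p-1) * m powr p) * ennreal (indicator I s) \<partial>lborel)"
    proof (rule nn_integral_mono)
      fix s
      have "p * m powr (p - 1) * F s \<le> F s powr p + (p - 1) * m powr p"
        by (rule tangent_ineq) (use p m0 F0 in auto)
      then show "ennreal (indicator I s * (p * m powr (p - 1) * F s))
          \<le> ennreal (indicator I s * F s powr p) + ennreal ((p - 1) * m powr p) * ennreal (indicator I s)"
        using p m0 by (auto simp: indicator_def simp flip: ennreal_plus intro!: ennreal_leI)
    qed
    also have "\<dots> = Hp + ennreal ((p-1) * m powr p) * ennreal (2*\<rho>)"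
      by (subst nn_integral_add) (auto simp: nn_integral_cmult lenI[unfolded I_def] Hp_def I_def)
    finally have le1: "ennreal (p * m powr (p-1)) * ennreal \<gamma> \<le> ennreal h + ennreal ((p-1) * m powr p) * ennreal (2*\<rho>)"
      by (simp add: G\<gamma> Hh)
    have e1: "ennreal (p * m powr (p-1)) * ennreal \<gamma> = ennreal (p * m powr (p-1) * \<gamma>)"
      using p \<gamma>0 by (intro ennreal_mult[symmetric]) auto
    have e2: "ennreal h + ennreal ((p-1) * m powr p) * ennreal (2*\<rho>) = ennreal (h + (p-1) * m powr p * (2*\<rho>))"
      using p h0 \<rho> by (simp add: ennreal_plus ennreal_mult)
    have "p * m powr (p-1) * \<gamma> \<le> h + (p-1) * m powr p * (2*\<rho>)"
      using le1 unfolding e1 e2 using h0 p m0 \<rho> by (subst (asm) ennreal_le_iff) auto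
    moreover have g: "\<gamma> = m * (2*\<rho>)" using \<rho> by (simp add: m_def)
    moreover have mm: "m powr (p-1) * m = m powr p" using m0 by (simp add: powr_diff)
    moreover have "p * m powr (p-1) * \<gamma> = p * (m powr p * (2*\<rho>))"
      unfolding g mm[symmetric] by (simp add: mult_ac)
    ultimately have "p * (m powr p * (2*\<rho>)) \<le> h + (p-1) * m powr p * (2*\<rho>)"
      by linarith
    then have mh: "m powr p * (2*\<rho>) \<le> h" by (simp add: algebra_simps)
    have "(2*\<rho>) powr (p-1) * (2*\<rho>) = (2*\<rho>) powr p" using \<rho> by (simp add: powr_diff)
    then have "\<gamma> powr p = m powr p * (2*\<rho>) * (2*\<rho>) powr (p-1)"
      unfolding g using m0 \<rho> by (simp add: powr_mult mult_ac)
    also have "\<dots> \<le> h * (2*\<rho>) powr (p-1)"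
      using mh by (intro mult_right_mono) auto
    finally show ?thesis by (simp add: mult_ac)
  qed
  then show "enn2real (\<integral>\<^sup>+ s. ennreal (indicator {x-\<rho>..x+\<rho>} s * F s) \<partial>lborel) powr p
          \<le> (2*\<rho>) powr (p - 1) * enn2real (\<integral>\<^sup>+ s. ennreal (indicator {x-\<rho>..x+\<rho>} s * F s powr p) \<partial>lborel)"
    by (simp add: \<gamma>_def h_def G_def Hp_def I_def)
qed

lemma meas_ind_ball[measurable]:
  "(\<lambda>(x::real, s::real). indicator {x-\<rho>..x+\<rho>} s :: real) \<in> borel_measurable (borel \<Otimes>\<^sub>M borel)"
proof -
  have "(\<lambda>(x::real, s::real). indicator {x-\<rho>..x+\<rho>} s :: real) = (\<lambda>(x, s). if x - \<rho> \<le> s \<and> s \<le> x + \<rho> then 1 else 0)"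
    by (auto simp: indicator_def fun_eq_iff)
  also have "\<dots> \<in> borel_measurable (borel \<Otimes>\<^sub>M borel)"
    by measurable
  finally show ?thesis .
qed

lemma int_ind_ball: "0 < \<rho> \<Longrightarrow> (\<integral>\<^sup>+ x. ennreal (indicator {x-\<rho>..x+\<rho>} s * c) \<partial>lborel) = ennreal (2*\<rho>) * ennreal c"
proof -
  assume \<rho>: "0 < \<rho>"
  have "(\<integral>\<^sup>+ x. ennreal (indicator {x-\<rho>..x+\<rho>} s * c) \<partial>lborel) = (\<integral>\<^sup>+ x. ennreal c * indicator {s-\<rho>..s+\<rho>} x \<partial>lborel)"
    by (intro nn_integral_cong) (auto simp: indicator_def)
  also have "\<dots> = ennreal c * ennreal (2*\<rho>)"
    using \<rho> by (simp add: nn_integral_cmult)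
  finally show ?thesis by (simp add: mult_ac)
qed

lemma g_Lq_bound:
  fixes F :: "real \<Rightarrow> real" and p q \<rho> a :: real
  assumes Fm[measurable]: "F \<in> borel_measurable borel" and F0: "\<And>s. 0 \<le> F s"
    and p: "1 \<le> p" and pq: "p \<le> q" and \<rho>: "0 < \<rho>" and a0: "0 \<le> a"
    and Ap: "(\<integral>\<^sup>+ s. ennreal (F s powr p) \<partial>lborel) = ennreal a"
  shows "(\<integral>\<^sup>+ x. enn_powr (\<integral>\<^sup>+ s. ennreal (indicator {x-\<rho>..x+\<rho>} s * F s) \<partial>lborel) q \<partial>lborel)
         \<le> ennreal ((2*\<rho>) powr (q - q/p + 1) * a powr (q/p))"
proof -
  define H where "H x = (\<integral>\<^sup>+ s. ennreal (indicator {x-\<rho>..x+\<rho>} s * F s powr p) \<partial>lborel)" for x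
  define V0 where "V0 = (2*\<rho>) powr (p-1) * a"
  define K where "K = V0 powr (q/p - 1) * (2*\<rho>) powr (p-1)"
  have K0: "0 \<le> K" by (simp add: K_def)
  have HA: "H x \<le> ennreal a" for x
    unfolding H_def Ap[symmetric]
    by (intro nn_integral_mono) (auto simp: indicator_def)
  have pt: "enn_powr (\<integral>\<^sup>+ s. ennreal (indicator {x-\<rho>..x+\<rho>} s * F s) \<partial>lborel) q \<le> ennreal K * H x" for x
  proof -
    have Hfin: "H x < \<infinity>" using HA[of x] by (metis ennreal_less_top infinity_ennreal_def order.strict_trans1)
    note J = jensen_interval[OF Fm F0 p \<rho> Hfin[unfolded H_def]]
    define G where "G = (\<integral>\<^sup>+ s. ennreal (indicator {x-\<rho>..x+\<rho>} s * F s) \<partial>lborel)"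
    define \<gamma> where "\<gamma> = enn2real G"
    define hx where "hx = enn2real (H x)"
    have G\<gamma>: "G = ennreal \<gamma>" and \<gamma>0: "0 \<le> \<gamma>" using J(1) by (auto simp: \<gamma>_def G_def less_top)
    have Hh: "H x = ennreal hx" and h0: "0 \<le> hx" using Hfin by (auto simp: hx_def less_top)
    have ha: "hx \<le> a" using HA[of x] Hh a0 by simp
    have vle: "\<gamma> powr p \<le> (2*\<rho>) powr (p-1) * hx"
      using J(2) by (simp add: \<gamma>_def G_def hx_def H_def)
    have "\<gamma> powr q \<le> K * hx"
    proof (cases "\<gamma> = 0")
      case True then show ?thesis using K0 h0 by simp
    next
      case False
      define v where "v = \<gamma> powr p"
      have v0: "0 < v" using False \<gamma>0 by (simp add: v_def)
      have "\<gamma> powr q = v powr (q/p)" using p by (simp add: v_def powr_powr)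
      also have "\<dots> = v powr (q/p - 1) * v" using v0 by (simp add: powr_diff)
      also have "\<dots> \<le> V0 powr (q/p - 1) * ((2*\<rho>) powr (p-1) * hx)"
      proof (rule mult_mono)
        have "v \<le> V0" unfolding V0_def using vle ha \<rho> v_def
          by (meson dual_order.trans mult_left_mono powr_ge_zero)
        then show "v powr (q/p - 1) \<le> V0 powr (q/p - 1)"
          using v0 p pq by (intro powr_mono2) (auto simp: field_simps)
      qed (use vle v_def v0 in auto)
      finally show ?thesis by (simp add: K_def mult_ac)
    qed
    then show ?thesis
      using K0 h0 \<gamma>0 by (simp add: G_def[symmetric] G\<gamma> Hh enn_powr_ennreal ennreal_mult[symmetric])
  qed
  have "(\<integral>\<^sup>+ x. enn_powr (\<integral>\<^sup>+ s. ennreal (indicator {x-\<rho>..x+\<rho>} s * F s) \<partial>lborel) q \<partial>lborel)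
        \<le> (\<integral>\<^sup>+ x. ennreal K * H x \<partial>lborel)"
    by (intro nn_integral_mono pt)
  also have "\<dots> = ennreal K * (\<integral>\<^sup>+ x. H x \<partial>lborel)"
    unfolding H_def by (rule nn_integral_cmult) measurable
  also have "(\<integral>\<^sup>+ x. H x \<partial>lborel) = (\<integral>\<^sup>+ s. (\<integral>\<^sup>+ x. ennreal (indicator {x-\<rho>..x+\<rho>} s * F s powr p) \<partial>lborel) \<partial>lborel)"
    unfolding H_def by (rule lborel_pair.Fubini'[symmetric]) measurable
  also have "\<dots> = (\<integral>\<^sup>+ s. ennreal (2*\<rho>) * ennreal (F s powr p) \<partial>lborel)"
    using \<rho> by (simp add: int_ind_ball)
  also have "\<dots> = ennreal (2*\<rho>) * ennreal a"
    by (subst nn_integral_cmult) (auto simp: Ap)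
  also have "ennreal K * (ennreal (2*\<rho>) * ennreal a) = ennreal (K * (2*\<rho>) * a)"
    using K0 \<rho> a0 by (simp add: ennreal_mult mult_ac)
  also have "\<dots> \<le> ennreal ((2*\<rho>) powr (q - q/p + 1) * a powr (q/p))"
  proof (rule ennreal_leI)
    show "K * (2*\<rho>) * a \<le> (2*\<rho>) powr (q - q/p + 1) * a powr (q/p)"
    proof (cases "a = 0")
      case True then show ?thesis by simp
    next
      case False
      then have a1: "0 < a" using a0 by simp
      have "K * (2*\<rho>) * a = ((2*\<rho>) powr ((p-1)*(q/p-1)) * (2*\<rho>) powr (p-1) * (2*\<rho>) powr 1)
             * (a powr (q/p-1) * a powr 1)"
        using \<rho> a1 by (simp add: K_def V0_def powr_mult powr_powr mult_ac)
      also have "\<dots> = (2*\<rho>) powr ((p-1)*(q/p-1) + (p-1) + 1) * a powr (q/p - 1 + 1)"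
        by (simp only: powr_add)
      also have "(p-1)*(q/p-1) + (p-1) + 1 = q - q/p + 1" using p by (simp add: field_simps)
      finally show ?thesis by simp
    qed
  qed
  finally show ?thesis .
qed

lemma ennreal_le_suminf: "(f::nat\<Rightarrow>ennreal) j \<le> suminf f"
  by (metis finite_insert finite.emptyI sum.insert sum_le_suminf summableI empty_iff sum.empty add_0_right zero_le)

definition Kern :: "real \<Rightarrow> real \<Rightarrow> real \<Rightarrow> real \<Rightarrow> real" where
  "Kern \<sigma> t r s = indicator {0..t} (\<sigma>*(s-r)+t) * (\<sigma>*(s-r)+t) powr (-1/2)"

definition Phi :: "real \<Rightarrow> (real \<Rightarrow> real) \<Rightarrow> real \<Rightarrow> real \<Rightarrow> ennreal" where
  "Phi \<sigma> f r t = (\<integral>\<^sup>+ s. ennreal (Kern \<sigma> t r s * \<bar>f s\<bar>) \<partial>lborel)"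

definition Rop :: "real \<Rightarrow> real set \<Rightarrow> (real \<Rightarrow> real) \<Rightarrow> real \<Rightarrow> ennreal" where
  "Rop \<sigma> E f r = indicator {2..} r * (SUP t\<in>{t\<in>E. t \<le> r / 2}. Phi \<sigma> f r t)"

lemma R1_eq: "R1 E f = Rop 1 E f"
  unfolding R1_def Rop_def Phi_def Kern_def
  by (intro ext arg_cong2[where f="(*)"] refl SUP_cong nn_integral_cong arg_cong[where f=ennreal])
     (auto simp: indicator_def algebra_simps)

lemma R2_eq: "R2 E f = Rop (-1) E f"
  unfolding R2_def Rop_def Phi_def Kern_def
  by (intro ext arg_cong2[where f="(*)"] refl SUP_cong nn_integral_cong arg_cong[where f=ennreal])
     (auto simp: indicator_def algebra_simps)

definition rho :: "nat \<Rightarrow> real" where "rho j = 2 * (1/2)^j"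
definition del :: "nat \<Rightarrow> real" where "del j = (1/2)^(j+1)"

definition gF :: "(real \<Rightarrow> real) \<Rightarrow> real \<Rightarrow> real \<Rightarrow> ennreal" where
  "gF F x \<rho> = (\<integral>\<^sup>+ s. ennreal (indicator {x-\<rho>..x+\<rho>} s * F s) \<partial>lborel)"

definition Fw :: "real \<Rightarrow> (real \<Rightarrow> real) \<Rightarrow> real \<Rightarrow> real" where
  "Fw P f s = indicator {0<..} s * \<bar>f s\<bar> * s powr P"

lemma Fw_nonneg: "0 \<le> Fw P f s"
  by (simp add: Fw_def)

lemma powr_meas[measurable]: "(\<lambda>x::real. x powr P) \<in> borel_measurable borel"
  by measurable

lemma Fw_meas[measurable]:
  assumes [measurable]: "f \<in> borel_measurable borel" shows "Fw P f \<in> borel_measurable borel"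
  unfolding Fw_def by measurable

lemma dyadic_exists:
  fixes u :: real assumes "0 < u" "u \<le> 2"
  shows "\<exists>j. (1/2)^j < u \<and> u \<le> 2 * (1/2)^j"
proof -
  obtain n where n: "(1/2::real)^n < u" using real_arch_pow_inv[of u "1/2"] assms by auto
  define j where "j = (LEAST j. (1/2::real)^j < u)"
  have j: "(1/2::real)^j < u" unfolding j_def by (rule LeastI[of _ n]) (rule n)
  show ?thesis
  proof (cases j)
    case 0 then show ?thesis using j assms by (intro exI[of _ 0]) auto
  next
    case (Suc k)
    have "\<not> (1/2::real)^k < u" using Suc unfolding j_def
      by (metis Suc j_def lessI not_less_Least)
    then show ?thesis using j Suc by (intro exI[of _ j]) auto
  qed
qed

lemma half_pow_powr: "((1/2::real)^j) powr (-1/2) = 2 powr (real j / 2)"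
proof -
  have "(1/2::real)^j = 1 / 2 powr real j"
    by (simp add: powr_realpow power_one_over)
  also have "\<dots> = 2 powr (- real j)" by (simp add: powr_minus_divide)
  finally have "(1/2::real)^j = 2 powr (- real j)" .
  then show ?thesis by (simp add: powr_powr)
qed

lemma Dec:
  fixes f :: "real \<Rightarrow> real"
  assumes fm[measurable]: "f \<in> borel_measurable borel"
    and \<sigma>: "\<sigma> = 1 \<or> \<sigma> = -1" and t0: "0 \<le> t" and t2: "t \<le> 2" and tr: "2*t \<le> r" and r0: "0 < r"
    and P0: "0 \<le> P" and a: "\<And>j. a j \<le> t \<and> t \<le> a j + del j"
  shows "Phi \<sigma> f r t \<le> ennreal ((2/r) powr P) *
           (\<Sum>j. ennreal (2 powr (real j/2)) * gF (Fw P f) (r - \<sigma> * a j) (rho j))"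
proof -
  define c where "c = (2/r) powr P"
  have c0: "0 \<le> c" by (simp add: c_def)
  have "ennreal c * (\<Sum>j. ennreal (2 powr (real j/2)) * gF (Fw P f) (r - \<sigma> * a j) (rho j))
     = ennreal c * (\<integral>\<^sup>+ s. (\<Sum>j. ennreal (2 powr (real j/2)) *
          ennreal (indicator {(r - \<sigma> * a j) - rho j..(r - \<sigma> * a j) + rho j} s * Fw P f s)) \<partial>lborel)"
    unfolding gF_def
    by (subst nn_integral_suminf) (auto simp: nn_integral_cmult)
  also have "\<dots> = (\<integral>\<^sup>+ s. ennreal c * (\<Sum>j. ennreal (2 powr (real j/2)) *
          ennreal (indicator {(r - \<sigma> * a j) - rho j..(r - \<sigma> * a j) + rho j} s * Fw P f s)) \<partial>lborel)"
    by (rule nn_integral_cmult[symmetric]) measurable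
  finally have RHS: "ennreal c * (\<Sum>j. ennreal (2 powr (real j/2)) * gF (Fw P f) (r - \<sigma> * a j) (rho j)) = \<dots>" .
  have "Phi \<sigma> f r t \<le> (\<integral>\<^sup>+ s. ennreal c * (\<Sum>j. ennreal (2 powr (real j/2)) *
          ennreal (indicator {(r - \<sigma> * a j) - rho j..(r - \<sigma> * a j) + rho j} s * Fw P f s)) \<partial>lborel)"
    unfolding Phi_def
  proof (rule nn_integral_mono)
    fix s
    define u where "u = \<sigma>*(s-r)+t"
    show "ennreal (Kern \<sigma> t r s * \<bar>f s\<bar>) \<le> ennreal c * (\<Sum>j. ennreal (2 powr (real j/2)) *
          ennreal (indicator {(r - \<sigma> * a j) - rho j..(r - \<sigma> * a j) + rho j} s * Fw P f s))"
    proof (cases "0 < u \<and> u \<le> t")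
      case False
      then have "Kern \<sigma> t r s = 0" by (auto simp: Kern_def u_def[symmetric] indicator_def)
      then show ?thesis by simp
    next
      case True
      then have u0: "0 < u" and ut: "u \<le> t" by auto
      obtain j where j1: "(1/2)^j < u" and j2: "u \<le> 2 * (1/2)^j"
        using dyadic_exists[of u] u0 ut t2 by auto
      define hj :: real where "hj = (1/2)^j"
      have hp: "(1/2::real)^(j+1) = hj / 2" by (simp add: hj_def)
      have pos: "0 < hj" by (simp add: hj_def)
      have rj: "rho j = 2 * hj" by (simp add: rho_def hj_def)
      have j1': "hj < u" and j2': "u \<le> 2 * hj" using j1 j2 by (auto simp: hj_def)
      have aj: "a j \<le> t" "t \<le> a j + hj / 2" using a[of j] by (auto simp: del_def hp hj_def)
      have sin: "s \<in> {(r - \<sigma> * a j) - rho j..(r - \<sigma> * a j) + rho j}"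
      proof (cases "\<sigma> = 1")
        case True
        then have "u = s - r + t" by (simp add: u_def)
        then show ?thesis unfolding rj using True j1' j2' aj pos by simp
      next
        case False
        then have "\<sigma> = -1" using \<sigma> by simp
        then have "u = r - s + t" by (simp add: u_def)
        then show ?thesis unfolding rj using \<open>\<sigma> = -1\<close> j1' j2' aj pos by simp
      qed
      have sr: "r/2 \<le> s"
      proof (cases "\<sigma> = 1")
        case True
        then have "u = s - r + t" by (simp add: u_def)
        then show ?thesis using ut u0 tr by simp
      next
        case False
        then have "\<sigma> = -1" using \<sigma> by simp
        then have "u = r - s + t" by (simp add: u_def)
        then show ?thesis using ut u0 tr by simp
      qed
      have Ku: "Kern \<sigma> t r s = u powr (-1/2)"
        using u0 ut by (simp add: Kern_def u_def[symmetric])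
      have "u powr (-1/2) \<le> ((1/2)^j) powr (-1/2)"
        using j1 by (intro powr_mono2') auto
      then have Kb: "Kern \<sigma> t r s \<le> 2 powr (real j / 2)"
        using Ku half_pow_powr by simp
      have spos: "0 < s" using sr r0 by simp
      have "1 \<le> (2 * s / r) powr P"
        using sr r0 P0 by (intro ge_one_powr_ge_zero) (auto simp: field_simps)
      also have "(2 * s / r) powr P = c * s powr P"
        using spos r0 by (simp add: c_def powr_mult[symmetric])
      finally have c1: "1 \<le> c * s powr P" .
      have "\<bar>f s\<bar> = \<bar>f s\<bar> * 1" by simp
      also have "\<dots> \<le> \<bar>f s\<bar> * (c * s powr P)" using c1 by (intro mult_left_mono) auto
      also have "\<dots> = c * Fw P f s" using spos by (simp add: Fw_def)
      finally have "\<bar>f s\<bar> \<le> c * Fw P f s" .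
      then have kb0: "Kern \<sigma> t r s * \<bar>f s\<bar> \<le> 2 powr (real j / 2) * (c * Fw P f s)"
        using Kb Ku by (intro mult_mono) auto
      also have "\<dots> = c * (2 powr (real j / 2) * (indicator {(r - \<sigma> * a j) - rho j..(r - \<sigma> * a j) + rho j} s * Fw P f s))"
        using sin by simp
      finally have kb: "Kern \<sigma> t r s * \<bar>f s\<bar> \<le> c * (2 powr (real j / 2) * (indicator {(r - \<sigma> * a j) - rho j..(r - \<sigma> * a j) + rho j} s * Fw P f s))" .
      have "ennreal (Kern \<sigma> t r s * \<bar>f s\<bar>) \<le> ennreal c * (ennreal (2 powr (real j/2)) *
          ennreal (indicator {(r - \<sigma> * a j) - rho j..(r - \<sigma> * a j) + rho j} s * Fw P f s))"
      proof -
        have eq: "ennreal c * (ennreal (2 powr (real j/2)) *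
          ennreal (indicator {(r - \<sigma> * a j) - rho j..(r - \<sigma> * a j) + rho j} s * Fw P f s))
          = ennreal (c * (2 powr (real j / 2) * (indicator {(r - \<sigma> * a j) - rho j..(r - \<sigma> * a j) + rho j} s * Fw P f s)))"
          using c0 Fw_nonneg[of P f s] by (simp add: ennreal_mult)
        show ?thesis unfolding eq by (rule ennreal_leI) (rule kb)
      qed
      also have "\<dots> \<le> ennreal c * (\<Sum>j. ennreal (2 powr (real j/2)) *
          ennreal (indicator {(r - \<sigma> * a j) - rho j..(r - \<sigma> * a j) + rho j} s * Fw P f s))"
        by (intro mult_left_mono ennreal_le_suminf[of "\<lambda>j. ennreal (2 powr (real j/2)) *
          ennreal (indicator {(r - \<sigma> * a j) - rho j..(r - \<sigma> * a j) + rho j} s * Fw P f s)"]) auto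
      finally show ?thesis .
    qed
  qed
  then show ?thesis using RHS by (simp add: c_def)
qed

lemma Kern_meas[measurable]:
  "(\<lambda>(r, s). Kern \<sigma> t r s) \<in> borel_measurable (borel \<Otimes>\<^sub>M borel)"
proof -
  have "(\<lambda>(r, s). Kern \<sigma> t r s) = (\<lambda>(r, s). (if 0 \<le> \<sigma>*(s-r)+t \<and> \<sigma>*(s-r)+t \<le> t then 1 else 0) * (\<sigma>*(s-r)+t) powr (-1/2))"
    by (auto simp: Kern_def indicator_def fun_eq_iff)
  also have "\<dots> \<in> borel_measurable (borel \<Otimes>\<^sub>M borel)"
    by measurable
  finally show ?thesis .
qed

lemma Kern_meas2[measurable]:
  "(\<lambda>s. Kern \<sigma> t r s) \<in> borel_measurable borel"
proof -
  have "(\<lambda>s. Kern \<sigma> t r s) = (\<lambda>s. (if 0 \<le> \<sigma>*(s-r)+t \<and> \<sigma>*(s-r)+t \<le> t then 1 else 0) * (\<sigma>*(s-r)+t) powr (-1/2))"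
    by (auto simp: Kern_def indicator_def fun_eq_iff)
  also have "\<dots> \<in> borel_measurable borel"
    by measurable
  finally show ?thesis .
qed

lemma Phi_meas[measurable]:
  assumes [measurable]: "f \<in> borel_measurable borel"
  shows "(\<lambda>r. Phi \<sigma> f r t) \<in> borel_measurable borel"
  unfolding Phi_def
  by (rule lborel.borel_measurable_nn_integral) measurable

lemma Phi_left:
  fixes f :: "real \<Rightarrow> real" and d :: "nat \<Rightarrow> real"
  assumes fm[measurable]: "f \<in> borel_measurable borel"
    and dlt: "\<And>n. d n < t" and dconv: "\<And>e. 0 < e \<Longrightarrow> \<exists>N. \<forall>n\<ge>N. t - e < d n"
  shows "Phi \<sigma> f r t \<le> (SUP n. Phi \<sigma> f r (d n))"
proof -
  have "Phi \<sigma> f r t \<le> (\<integral>\<^sup>+ s. liminf (\<lambda>n. ennreal (Kern \<sigma> (d n) r s * \<bar>f s\<bar>)) \<partial>lborel)"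
    unfolding Phi_def
  proof (rule nn_integral_mono)
    fix s
    define u where "u = \<sigma>*(s-r)+t"
    show "ennreal (Kern \<sigma> t r s * \<bar>f s\<bar>) \<le> liminf (\<lambda>n. ennreal (Kern \<sigma> (d n) r s * \<bar>f s\<bar>))"
    proof (cases "0 < u \<and> u \<le> t")
      case False
      then have "Kern \<sigma> t r s = 0" by (auto simp: Kern_def u_def[symmetric] indicator_def)
      then show ?thesis by simp
    next
      case True
      then have u0: "0 < u" and ut: "u \<le> t" by auto
      obtain N where N: "\<And>n. n \<ge> N \<Longrightarrow> t - u < d n" using dconv[OF u0] by auto
      show ?thesis
      proof (rule Liminf_bounded, rule eventually_sequentiallyI[of N])
        fix n assume "N \<le> n"
        then have dn: "t - u < d n" using N by auto
        define v where "v = \<sigma>*(s-r) + d n"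
        have v: "v = u - (t - d n)" by (simp add: u_def v_def)
        have v0: "0 < v" and vd: "v \<le> d n" and vu: "v \<le> u" using v dn ut dlt[of n] by auto
        have "Kern \<sigma> t r s = u powr (-1/2)" using u0 ut by (simp add: Kern_def u_def[symmetric])
        also have "\<dots> \<le> v powr (-1/2)" using v0 vu by (intro powr_mono2') auto
        also have "\<dots> = Kern \<sigma> (d n) r s" using v0 vd by (simp add: Kern_def v_def[symmetric])
        finally have "Kern \<sigma> t r s * \<bar>f s\<bar> \<le> Kern \<sigma> (d n) r s * \<bar>f s\<bar>"
          by (intro mult_right_mono) auto
        then show "ennreal (Kern \<sigma> t r s * \<bar>f s\<bar>) \<le> ennreal (Kern \<sigma> (d n) r s * \<bar>f s\<bar>)"
          by (rule ennreal_leI)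
      qed
    qed
  qed
  also have "\<dots> \<le> liminf (\<lambda>n. Phi \<sigma> f r (d n))"
    unfolding Phi_def
  proof (rule nn_integral_liminf)
    fix n
    show "(\<lambda>s. ennreal (Kern \<sigma> (d n) r s * \<bar>f s\<bar>)) \<in> borel_measurable lborel"
      by measurable
  qed
  also have "\<dots> \<le> (SUP n. Phi \<sigma> f r (d n))"
    unfolding liminf_SUP_INF
    by (intro SUP_mono) (auto intro!: INF_lower2)
  finally show ?thesis .
qed

lemma left_dense_countable:
  fixes E :: "real set"
  shows "\<exists>D. countable D \<and> D \<subseteq> E \<and> (\<forall>t\<in>E. t \<in> D \<or> (\<forall>e>0. \<exists>d\<in>D. t - e < d \<and> d < t))"
proof -
  define pick where "pick = (\<lambda>(q::real, q'::real). SOME x. x \<in> E \<and> q < x \<and> x < q')"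
  define QQ where "QQ = {(q, q'). q \<in> \<rat> \<and> q' \<in> \<rat> \<and> (\<exists>x\<in>E. q < x \<and> x < q')}"
  define D0 where "D0 = pick ` QQ"
  define Pm where "Pm = (\<lambda>q t. t \<in> E \<and> q < t \<and> (\<forall>x\<in>E. q < x \<longrightarrow> t \<le> x))"
  define mn where "mn = (\<lambda>q. SOME t. Pm q t)"
  define D1 where "D1 = {t. \<exists>q\<in>\<rat>. Pm q t}"
  have cQQ: "countable QQ"
  proof (rule countable_subset)
    show "QQ \<subseteq> \<rat> \<times> \<rat>" by (auto simp: QQ_def)
    show "countable (\<rat> \<times> \<rat>)" by (intro countable_SIGMA countable_rat)
  qed
  have cD0: "countable D0" unfolding D0_def using cQQ by simp
  have D0E: "D0 \<subseteq> E"
  proof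
    fix y assume "y \<in> D0"
    then obtain q q' where qq: "(q, q') \<in> QQ" and y: "y = pick (q, q')" by (auto simp: D0_def)
    then have "\<exists>x. x \<in> E \<and> q < x \<and> x < q'" by (auto simp: QQ_def)
    then have "pick (q, q') \<in> E \<and> q < pick (q, q') \<and> pick (q, q') < q'"
      unfolding pick_def prod.case by (rule someI_ex)
    then show "y \<in> E" using y by simp
  qed
  have uniq: "Pm q t \<Longrightarrow> Pm q t' \<Longrightarrow> t = t'" for q t t'
    unfolding Pm_def by (meson antisym)
  have D1sub: "D1 \<subseteq> mn ` \<rat>"
  proof
    fix t assume "t \<in> D1"
    then obtain q where q: "q \<in> \<rat>" "Pm q t" by (auto simp: D1_def)
    then have "Pm q (mn q)" unfolding mn_def by (metis someI_ex)
    then have "mn q = t" using uniq q by blast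
    then show "t \<in> mn ` \<rat>" using q by blast
  qed
  have cD1: "countable D1" using D1sub by (rule countable_subset) (simp add: countable_rat)
  have D1E: "D1 \<subseteq> E" by (auto simp: D1_def Pm_def)
  have propD: "t \<in> D0 \<union> D1 \<or> (\<forall>e>0. \<exists>d\<in>D0 \<union> D1. t - e < d \<and> d < t)" if tE: "t \<in> E" for t
  proof (cases "\<forall>e>0. \<exists>x\<in>E. t - e < x \<and> x < t")
    case True
    have "\<forall>e>0. \<exists>d\<in>D0 \<union> D1. t - e < d \<and> d < t"
    proof (intro allI impI)
      fix e :: real assume e: "0 < e"
      obtain x where x: "x \<in> E" "t - e < x" "x < t" using True e by blast
      obtain q where q: "q \<in> \<rat>" "t - e < q" "q < x" using Rats_dense_in_real[of "t - e" x] x by auto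
      obtain q' where q': "q' \<in> \<rat>" "x < q'" "q' < t" using Rats_dense_in_real[of x t] x by auto
      have qq: "(q, q') \<in> QQ" using q q' x by (auto simp: QQ_def)
      then have "\<exists>x. x \<in> E \<and> q < x \<and> x < q'" by (auto simp: QQ_def)
      then have "pick (q, q') \<in> E \<and> q < pick (q, q') \<and> pick (q, q') < q'"
        unfolding pick_def prod.case by (rule someI_ex)
      moreover have "pick (q, q') \<in> D0" using qq by (auto simp: D0_def)
      ultimately show "\<exists>d\<in>D0 \<union> D1. t - e < d \<and> d < t" using q q'
        by (intro bexI[of _ "pick (q, q')"]) auto
    qed
    then show ?thesis by blast
  next
    case False
    then obtain e where e: "0 < e" and no: "\<And>x. x \<in> E \<Longrightarrow> \<not> (t - e < x \<and> x < t)" by blast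
    obtain q where q: "q \<in> \<rat>" "t - e < q" "q < t" using Rats_dense_in_real[of "t - e" t] e by auto
    have "Pm q t" unfolding Pm_def using tE q no by force
    then have "t \<in> D1" using q by (auto simp: D1_def)
    then show ?thesis by blast
  qed
  show ?thesis
    by (rule exI[of _ "D0 \<union> D1"]) (use cD0 cD1 D0E D1E propD in auto)
qed

lemma Rop_countable:
  fixes f :: "real \<Rightarrow> real"
  assumes fm[measurable]: "f \<in> borel_measurable borel"
    and DE: "D \<subseteq> E" and Dp: "\<forall>t\<in>E. t \<in> D \<or> (\<forall>e>0. \<exists>d\<in>D. t - e < d \<and> d < t)"
  shows "Rop \<sigma> E f r = indicator {2..} r * (SUP d\<in>D. (if d \<le> r/2 then Phi \<sigma> f r d else 0))"
proof -
  have "(SUP t\<in>{t\<in>E. t \<le> r / 2}. Phi \<sigma> f r t) = (SUP d\<in>D. (if d \<le> r/2 then Phi \<sigma> f r d else 0))"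
  proof (rule antisym)
    show "(SUP t\<in>{t\<in>E. t \<le> r / 2}. Phi \<sigma> f r t) \<le> (SUP d\<in>D. (if d \<le> r/2 then Phi \<sigma> f r d else 0))"
    proof (rule SUP_least)
      fix t assume t: "t \<in> {t\<in>E. t \<le> r / 2}"
      show "Phi \<sigma> f r t \<le> (SUP d\<in>D. (if d \<le> r/2 then Phi \<sigma> f r d else 0))"
      proof (cases "t \<in> D")
        case True
        then show ?thesis using t by (intro SUP_upper2[of t]) auto
      next
        case False
        then have ap: "\<forall>e>0. \<exists>d\<in>D. t - e < d \<and> d < t" using Dp t by auto
        define dn where "dn n = (SOME d. d \<in> D \<and> t - 1/(Suc n) < d \<and> d < t)" for n
        have dn: "dn n \<in> D \<and> t - 1/(Suc n) < dn n \<and> dn n < t" for n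
        proof -
          have "\<exists>d. d \<in> D \<and> t - 1/(Suc n) < d \<and> d < t" using ap[rule_format, of "1/real (Suc n)"] by auto
          then show ?thesis unfolding dn_def by (rule someI_ex)
        qed
        have conv: "\<exists>N. \<forall>n\<ge>N. t - e < dn n" if e: "0 < e" for e
        proof -
          obtain N where N: "1 / real (Suc N) < e"
            using reals_Archimedean e by (metis inverse_eq_divide of_nat_Suc)
          show ?thesis
          proof (intro exI allI impI)
            fix n assume "N \<le> n"
            then have "1 / real (Suc n) \<le> 1 / real (Suc N)"
              by (intro divide_left_mono) auto
            then show "t - e < dn n" using dn[of n] N by linarith
          qed
        qed
        have "Phi \<sigma> f r t \<le> (SUP n. Phi \<sigma> f r (dn n))"
          by (rule Phi_left[OF fm]) (use dn conv in auto)
        also have "\<dots> \<le> (SUP d\<in>D. (if d \<le> r/2 then Phi \<sigma> f r d else 0))"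
        proof (rule SUP_least)
          fix n
          have "dn n \<le> r/2" using dn[of n] t by auto
          then show "Phi \<sigma> f r (dn n) \<le> (SUP d\<in>D. (if d \<le> r/2 then Phi \<sigma> f r d else 0))"
            using dn[of n] by (intro SUP_upper2[of "dn n"]) auto
        qed
        finally show ?thesis .
      qed
    qed
  next
    show "(SUP d\<in>D. (if d \<le> r/2 then Phi \<sigma> f r d else 0)) \<le> (SUP t\<in>{t\<in>E. t \<le> r / 2}. Phi \<sigma> f r t)"
    proof (rule SUP_least)
      fix d assume d: "d \<in> D"
      show "(if d \<le> r/2 then Phi \<sigma> f r d else 0) \<le> (SUP t\<in>{t\<in>E. t \<le> r / 2}. Phi \<sigma> f r t)"
        using d DE by (auto intro!: SUP_upper)
    qed
  qed
  then show ?thesis by (simp add: Rop_def)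
qed

lemma Rop_meas:
  fixes f :: "real \<Rightarrow> real"
  assumes fm[measurable]: "f \<in> borel_measurable borel"
  shows "Rop \<sigma> E f \<in> borel_measurable borel"
proof -
  obtain D where D: "countable D" "D \<subseteq> E" "\<forall>t\<in>E. t \<in> D \<or> (\<forall>e>0. \<exists>d\<in>D. t - e < d \<and> d < t)"
    using left_dense_countable[of E] by blast
  have eq: "Rop \<sigma> E f = (\<lambda>r. indicator {2..} r * (SUP d\<in>D. (if d \<le> r/2 then Phi \<sigma> f r d else 0)))"
    using Rop_countable[OF fm D(2,3)] by (intro ext) simp
  have [simp]: "countable D" by (rule D(1))
  show ?thesis unfolding eq by measurable
qed

lemma enn_powr_meas[measurable]:
  assumes [measurable]: "g \<in> borel_measurable M"
  shows "(\<lambda>x. enn_powr (g x) a) \<in> borel_measurable M"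
  unfolding enn_powr_def by measurable

lemma gF_meas[measurable]:
  assumes [measurable]: "F \<in> borel_measurable borel"
  shows "(\<lambda>x. gF F x \<rho>) \<in> borel_measurable borel"
  unfolding gF_def by (rule lborel.borel_measurable_nn_integral) measurable

lemma nn_integral_shift:
  fixes h :: "real \<Rightarrow> ennreal"
  assumes [measurable]: "h \<in> borel_measurable borel"
  shows "(\<integral>\<^sup>+ r. h (r - c) \<partial>lborel) = (\<integral>\<^sup>+ x. h x \<partial>lborel)"
  using nn_integral_real_affine[of h 1 "-c"] by simp

lemma Ap_eq:
  assumes "0 < pr" and fm[measurable]: "f \<in> borel_measurable borel"
  shows "(\<integral>\<^sup>+ x. enn_powr (ennreal \<bar>f x\<bar>) pr \<partial>mu2) = (\<integral>\<^sup>+ x. ennreal (Fw (1/pr) f x powr pr) \<partial>lborel)"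
proof -
  have "(\<integral>\<^sup>+ x. enn_powr (ennreal \<bar>f x\<bar>) pr \<partial>mu2) = (\<integral>\<^sup>+ x. ennreal (\<bar>f x\<bar> powr pr) \<partial>mu2)"
    by (simp add: enn_powr_ennreal)
  also have "\<dots> = (\<integral>\<^sup>+ x. (ennreal x * indicator {0<..} x) * ennreal (\<bar>f x\<bar> powr pr) \<partial>lborel)"
    unfolding mu2_def by (rule nn_integral_density) auto
  also have "\<dots> = (\<integral>\<^sup>+ x. ennreal (Fw (1/pr) f x powr pr) \<partial>lborel)"
  proof (rule nn_integral_cong)
    fix x :: real
    show "(ennreal x * indicator {0<..} x) * ennreal (\<bar>f x\<bar> powr pr) = ennreal (Fw (1/pr) f x powr pr)"
    proof (cases "0 < x")
      case True
      have "Fw (1/pr) f x powr pr = (\<bar>f x\<bar> * x powr (1/pr)) powr pr" using True by (simp add: Fw_def)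
      also have "\<dots> = \<bar>f x\<bar> powr pr * x" using True assms by (simp add: powr_mult powr_powr)
      finally show ?thesis using True by (simp add: ennreal_mult mult.commute)
    next
      case False then show ?thesis by (simp add: Fw_def)
    qed
  qed
  finally show ?thesis .
qed

lemma geom_bound:
  fixes x :: "nat \<Rightarrow> ennreal" and K \<theta> :: real
  assumes "0 \<le> \<theta>" "\<theta> < 1" "0 \<le> K" "\<And>j. x j \<le> ennreal (K * \<theta>^j)"
  shows "suminf x \<le> ennreal (K / (1 - \<theta>))"
proof -
  have sm: "summable (\<lambda>j. K * \<theta>^j)" using assms by (intro summable_mult summable_geometric) auto
  have "suminf x \<le> (\<Sum>j. ennreal (K * \<theta>^j))"
    by (intro suminf_le summableI assms(4))
  also have "\<dots> = ennreal (\<Sum>j. K * \<theta>^j)"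
    using assms sm by (intro suminf_ennreal2) auto
  also have "(\<Sum>j. K * \<theta>^j) = K / (1 - \<theta>)"
    using assms by (simp add: suminf_mult suminf_geometric divide_inverse)
  finally show ?thesis .
qed

lemma cover_exists:
  assumes E: "E \<subseteq> {1..2}" and \<delta>: "0 < \<delta>"
  shows "\<exists>a::nat \<Rightarrow> real. E \<subseteq> (\<Union>i<nat \<lfloor>1/\<delta>\<rfloor> + 1. {a i .. a i + \<delta>})"
proof (intro exI subsetI)
  fix x assume x: "x \<in> E"
  define i where "i = nat \<lfloor>(x-1)/\<delta>\<rfloor>"
  have x12: "1 \<le> x" "x \<le> 2" using x E by auto
  have fl0: "0 \<le> \<lfloor>(x-1)/\<delta>\<rfloor>" using x12 \<delta> by simp
  have i: "real i = of_int \<lfloor>(x-1)/\<delta>\<rfloor>" using fl0 by (simp add: i_def)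
  have "real i \<le> (x-1)/\<delta>" using i by simp
  then have lo: "1 + real i * \<delta> \<le> x" using \<delta> by (simp add: field_simps)
  have "(x-1)/\<delta> < real i + 1" using i by linarith
  then have hi: "x \<le> 1 + real i * \<delta> + \<delta>" using \<delta> by (simp add: field_simps)
  have "\<lfloor>(x-1)/\<delta>\<rfloor> \<le> \<lfloor>1/\<delta>\<rfloor>" using x12 \<delta> by (intro floor_mono divide_right_mono) auto
  then have "i < nat \<lfloor>1/\<delta>\<rfloor> + 1" using fl0 by (simp add: i_def)
  then show "x \<in> (\<Union>i<nat \<lfloor>1/\<delta>\<rfloor> + 1. {(\<lambda>i. 1 + real i * \<delta>) i .. (\<lambda>i. 1 + real i * \<delta>) i + \<delta>})"
    using lo hi by auto
qed

lemma cover_num_le: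
  assumes "E \<subseteq> {1..2}" "0 < \<delta>"
  shows "cover_num E \<delta> \<le> nat \<lfloor>1/\<delta>\<rfloor> + 1"
  unfolding cover_num_def using cover_exists[OF assms] by (rule Least_le)

lemma cover_num_spec:
  assumes "E \<subseteq> {1..2}" "0 < \<delta>"
  shows "\<exists>a::nat \<Rightarrow> real. E \<subseteq> (\<Union>i<cover_num E \<delta>. {a i .. a i + \<delta>})"
  unfolding cover_num_def by (rule LeastI_ex) (use cover_exists[OF assms] in blast)

lemma mdim_witness:
  assumes E: "E \<subseteq> {1..2}" and z: "minkowski_dim E < z"
  shows "\<exists>a c. 0 < a \<and> a < z \<and> (\<forall>\<delta>\<in>{0<..<1}. real (cover_num E \<delta>) \<le> c * \<delta> powr (-a))"
proof -
  define S where "S = {a. a > 0 \<and> (\<exists>c::real. \<forall>\<delta>\<in>{0<..<1}. real (cover_num E \<delta>) \<le> c * \<delta> powr (-a))}"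
  have "1 \<in> S"
  proof -
    have "real (cover_num E \<delta>) \<le> 2 * \<delta> powr (-1)" if \<delta>: "\<delta> \<in> {0<..<1}" for \<delta>
    proof -
      have d0: "0 < \<delta>" "\<delta> < 1" using \<delta> by auto
      have "real (cover_num E \<delta>) \<le> real (nat \<lfloor>1/\<delta>\<rfloor> + 1)"
        using cover_num_le[OF E d0(1)] by linarith
      also have "\<dots> \<le> 1/\<delta> + 1" using d0 by simp
      also have "\<dots> \<le> 2 / \<delta>" using d0 by (simp add: field_simps)
      also have "\<dots> = 2 * \<delta> powr (-1)" using d0 by (simp add: powr_minus_divide)
      finally show ?thesis .
    qed
    then show ?thesis unfolding S_def by (intro CollectI conjI exI[of _ 2]) auto
  qed
  then have ne: "S \<noteq> {}" by auto
  have "Inf S < z" using z by (simp add: minkowski_dim_def S_def)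
  then obtain a where "a \<in> S" "a < z" using cInf_lessD[OF ne] by blast
  then show ?thesis unfolding S_def by auto
qed

lemma pow2: "(2 powr y)^j = 2 powr (y * real j)"
  by (simp add: powr_realpow[symmetric] powr_powr)

lemma half_pow: "(1/2::real)^j = 2 powr (- real j)"
proof -
  have "(1/2::real)^j = 1 / 2 powr real j"
    by (simp add: powr_realpow power_one_over)
  also have "\<dots> = 2 powr (- real j)" by (simp add: powr_minus_divide)
  finally show ?thesis .
qed

lemma del_powr: "(del j) powr (-\<alpha>) = 2 powr (\<alpha> * (real j + 1))"
proof -
  have "del j = 2 powr (- real (j+1))" unfolding del_def by (rule half_pow)
  also have "- real (j+1) = - (real j + 1)" by simp
  finally have "del j = 2 powr (- (real j + 1))" .
  then have "(del j) powr (-\<alpha>) = 2 powr (- (real j + 1) * - \<alpha>)" by (simp add: powr_powr)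
  also have "- (real j + 1) * - \<alpha> = \<alpha> * (real j + 1)" by (simp add: algebra_simps)
  finally show ?thesis .
qed

lemma rho2_powr: "(2 * rho j) powr e = 2 powr (e * (2 - real j))"
proof -
  have "2 powr (2 + - real j) = 2 powr 2 * 2 powr (- real j)" by (rule powr_add)
  then have "2 * rho j = 2 powr (2 + - real j)" unfolding rho_def half_pow by simp
  also have "2 + - real j = 2 - real j" by simp
  finally show ?thesis by (simp add: powr_powr mult.commute)
qed

lemma ennreal_geom: "0 \<le> w \<Longrightarrow> w < 1 \<Longrightarrow> (\<Sum>j. ennreal (w^j)) = ennreal (1 / (1 - w))"
  by (subst suminf_ennreal2) (auto simp: suminf_geometric summable_geometric)

lemma Lp_fin: "0 \<le> q \<Longrightarrow> Lp_norm M (ennreal q) g = enn_powr (\<integral>\<^sup>+ x. enn_powr (g x) q \<partial>M) (1/q)"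
  by (simp add: Lp_norm_def)

lemma case_fin:
  fixes \<sigma> pr qr \<alpha>0 cc :: real and N :: "nat \<Rightarrow> nat" and A :: "nat \<Rightarrow> nat \<Rightarrow> real"
  assumes \<sigma>: "\<sigma> = 1 \<or> \<sigma> = -1" and E: "E \<subseteq> {1..2}" and p1: "1 \<le> pr" and pq: "pr \<le> qr"
    and cond: "1/pr - (1-\<alpha>0)/qr - 1/2 < 0"
    and cov: "\<And>j. E \<subseteq> (\<Union>i<N j. {A j i .. A j i + del j})"
    and Nb: "\<And>j. real (N j) \<le> cc * (del j) powr (-\<alpha>0)"
  shows "\<exists>C>0. \<forall>f. f \<in> borel_measurable borel \<longrightarrow>
           Lp_norm mu2 (ennreal qr) (Rop \<sigma> E f) \<le> ennreal C * Lp_norm mu2 (ennreal pr) (\<lambda>s. ennreal \<bar>f s\<bar>)"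
proof -
  define \<kappa> where "\<kappa> = - (1/pr - (1-\<alpha>0)/qr - 1/2)"
  define \<epsilon> where "\<epsilon> = \<kappa> / 2"
  define w :: real where "w = 2 powr (-\<epsilon>)"
  define P where "P = 1/pr"
  define Wr where "Wr = 1 / (1 - w)"
  define cj where "cj j = 2 powr ((1/2 + \<epsilon>) * real j * qr)" for j
  define e where "e = qr - qr/pr + 1"
  define \<theta> :: real where "\<theta> = 2 powr (qr * (1/2 + \<epsilon>) + \<alpha>0 - e)"
  define Kc where "Kc = cc * 2 powr (\<alpha>0 + 2 * e)"
  define K0 where "K0 = 2 powr (qr/pr) * Wr powr qr"
  define Ks where "Ks = Kc / (1 - \<theta>)"
  define C where "C = (K0 * Ks) powr (1/qr) + 1"
  have q1: "1 \<le> qr" using p1 pq by simp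
  have \<kappa>0: "0 < \<kappa>" using cond by (simp add: \<kappa>_def)
  have \<epsilon>0: "0 < \<epsilon>" using \<kappa>0 by (simp add: \<epsilon>_def)
  have w0: "0 < w" "w < 1" using \<epsilon>0 powr_less_mono[of "-\<epsilon>" 0 2] by (auto simp: w_def)
  have Wr0: "0 < Wr" using w0 by (simp add: Wr_def)
  have cc0: "0 \<le> cc"
  proof -
    have "0 \<le> cc * (del 0) powr (-\<alpha>0)" using Nb[of 0] by (meson of_nat_0_le_iff order_trans)
    moreover have "0 < (del 0) powr (-\<alpha>0)" by (simp add: del_def)
    ultimately show ?thesis by (simp add: zero_le_mult_iff)
  qed
  have \<theta>1: "\<theta> < 1" "0 \<le> \<theta>"
  proof -
    have "qr * (1/2 + \<epsilon>) + \<alpha>0 - e = - qr * \<kappa> / 2"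
      using p1 q1 by (simp add: e_def \<epsilon>_def \<kappa>_def field_simps)
    moreover have "- qr * \<kappa> / 2 < 0" using q1 \<kappa>0 by simp
    ultimately show "\<theta> < 1" "0 \<le> \<theta>" unfolding \<theta>_def
      using powr_less_mono[of "- qr * \<kappa> / 2" 0 2] by auto
  qed
  have Kc0: "0 \<le> Kc" using cc0 by (simp add: Kc_def)
  have Ks0: "0 \<le> Ks" using Kc0 \<theta>1 by (simp add: Ks_def)
  have K00: "0 \<le> K0" by (simp add: K0_def)
  have C0: "0 < C" by (simp add: C_def add_nonneg_pos)
  show ?thesis
  proof (intro exI[of _ C] conjI allI impI C0)
    fix f :: "real \<Rightarrow> real" assume fm[measurable]: "f \<in> borel_measurable borel"
    define F where "F = Fw P f"
    have Fm[measurable]: "F \<in> borel_measurable borel" by (simp add: F_def)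
    have F0: "\<And>s. 0 \<le> F s" by (simp add: F_def Fw_nonneg)
    define Ap where "Ap = (\<integral>\<^sup>+ s. ennreal (F s powr pr) \<partial>lborel)"
    have RHS: "Lp_norm mu2 (ennreal pr) (\<lambda>s. ennreal \<bar>f s\<bar>) = enn_powr Ap (1/pr)"
      using p1 by (simp add: Lp_fin Ap_eq Ap_def F_def P_def)
    show "Lp_norm mu2 (ennreal qr) (Rop \<sigma> E f) \<le> ennreal C * Lp_norm mu2 (ennreal pr) (\<lambda>s. ennreal \<bar>f s\<bar>)"
    proof (cases "Ap = \<infinity>")
      case True
      then show ?thesis using C0 by (simp add: RHS ennreal_mult_top)
    next
      case False
      then obtain a where Apa: "Ap = ennreal a" and a0: "0 \<le> a" by (cases Ap) auto
      define T where "T r = (\<Sum>j. ennreal (cj j) * (\<Sum>i<N j. enn_powr (gF F (r - \<sigma> * A j i) (rho j)) qr))" for r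
      have Tm[measurable]: "T \<in> borel_measurable borel" unfolding T_def by measurable
      have claim1: "Rop \<sigma> E f r \<le> indicator {2..} r * (ennreal ((2/r) powr P * Wr) * enn_powr (T r) (1/qr))" for r
      proof (cases "2 \<le> r")
        case False then show ?thesis by (simp add: Rop_def)
      next
        case True
        then have r0: "0 < r" by simp
        define Y where "Y = enn_powr (T r) (1/qr)"
        have "(SUP t\<in>{t\<in>E. t \<le> r/2}. Phi \<sigma> f r t) \<le> ennreal ((2/r) powr P * Wr) * Y"
        proof (rule SUP_least)
          fix t assume t: "t \<in> {t\<in>E. t \<le> r/2}"
          have "\<forall>j. \<exists>i. i < N j \<and> A j i \<le> t \<and> t \<le> A j i + del j"
          proof
            fix j
            have "t \<in> (\<Union>i<N j. {A j i .. A j i + del j})" using cov[of j] t by blast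
            then show "\<exists>i. i < N j \<and> A j i \<le> t \<and> t \<le> A j i + del j" by auto
          qed
          then obtain ii where ii: "\<And>j. ii j < N j \<and> A j (ii j) \<le> t \<and> t \<le> A j (ii j) + del j"
            by metis
          define y where "y j = gF F (r - \<sigma> * A j (ii j)) (rho j)" for j
          have t12: "1 \<le> t" "t \<le> 2" using t E by auto
          have P0: "0 \<le> P" using p1 by (simp add: P_def)
          have dec: "Phi \<sigma> f r t \<le> ennreal ((2/r) powr P) * (\<Sum>j. ennreal (2 powr (real j/2)) * y j)"
            unfolding y_def F_def
            by (rule Dec[OF fm \<sigma>]) (use t12 t r0 P0 ii in auto)
          have each: "ennreal (2 powr ((1/2+\<epsilon>) * real j)) * y j \<le> Y" for j
          proof -
            have "enn_powr (ennreal (2 powr ((1/2+\<epsilon>) * real j)) * y j) qr = ennreal (cj j) * enn_powr (y j) qr"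
              using q1 by (simp add: enn_powr_cmult powr_powr cj_def)
            also have "\<dots> \<le> ennreal (cj j) * (\<Sum>i<N j. enn_powr (gF F (r - \<sigma> * A j i) (rho j)) qr)"
            proof (rule mult_left_mono)
              show "enn_powr (y j) qr \<le> (\<Sum>i<N j. enn_powr (gF F (r - \<sigma> * A j i) (rho j)) qr)"
                unfolding y_def by (rule member_le_sum[of "ii j"]) (use ii[of j] in auto)
            qed simp
            also have "\<dots> \<le> T r" unfolding T_def
              by (rule ennreal_le_suminf[of "\<lambda>j. ennreal (cj j) * (\<Sum>i<N j. enn_powr (gF F (r - \<sigma> * A j i) (rho j)) qr)"])
            finally have le: "enn_powr (ennreal (2 powr ((1/2+\<epsilon>) * real j)) * y j) qr \<le> T r" .
            have "ennreal (2 powr ((1/2+\<epsilon>) * real j)) * y j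
                = enn_powr (enn_powr (ennreal (2 powr ((1/2+\<epsilon>) * real j)) * y j) qr) (1/qr)"
              using enn_powr_inv[of qr] q1 by simp
            also have "\<dots> \<le> Y" unfolding Y_def using q1 le by (intro enn_powr_mono) auto
            finally show ?thesis .
          qed
          have "(\<Sum>j. ennreal (2 powr (real j/2)) * y j) \<le> (\<Sum>j. ennreal (w^j) * Y)"
          proof (intro suminf_le summableI)
            fix j
            have "2 powr (real j/2) = w^j * 2 powr ((1/2+\<epsilon>) * real j)"
              by (simp add: w_def pow2 powr_add[symmetric] algebra_simps)
            then have "ennreal (2 powr (real j/2)) * y j = ennreal (w^j) * (ennreal (2 powr ((1/2+\<epsilon>) * real j)) * y j)"
              using w0 by (simp add: ennreal_mult mult.assoc)
            also have "\<dots> \<le> ennreal (w^j) * Y" by (intro mult_left_mono each) auto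
            finally show "ennreal (2 powr (real j/2)) * y j \<le> ennreal (w^j) * Y" .
          qed
          also have "\<dots> = ennreal Wr * Y"
            using w0 by (simp add: ennreal_suminf_multc ennreal_geom Wr_def suminf_geometric)
          finally have "(\<Sum>j. ennreal (2 powr (real j/2)) * y j) \<le> ennreal Wr * Y" .
          then have "Phi \<sigma> f r t \<le> ennreal ((2/r) powr P) * (ennreal Wr * Y)"
            using dec by (meson dual_order.trans mult_left_mono zero_le)
          also have "\<dots> = ennreal ((2/r) powr P * Wr) * Y"
            using Wr0 by (simp add: ennreal_mult mult.assoc)
          finally show "Phi \<sigma> f r t \<le> ennreal ((2/r) powr P * Wr) * Y" .
        qed
        then show ?thesis using True by (simp add: Rop_def Y_def)
      qed
      define B where "B r = indicator {2..} r * (ennreal (((2/r) powr P * Wr) powr qr) * T r)" for r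
      have Bm[measurable]: "B \<in> borel_measurable borel" unfolding B_def by measurable
      have claim2: "enn_powr (Rop \<sigma> E f r) qr \<le> B r" for r
      proof (cases "2 \<le> r")
        case False then show ?thesis by (simp add: Rop_def B_def)
      next
        case True
        have "enn_powr (Rop \<sigma> E f r) qr \<le> enn_powr (ennreal ((2/r) powr P * Wr) * enn_powr (T r) (1/qr)) qr"
          using claim1[of r] True q1 by (intro enn_powr_mono) auto
        also have "\<dots> = ennreal (((2/r) powr P * Wr) powr qr) * enn_powr (enn_powr (T r) (1/qr)) qr"
          using q1 Wr0 by (intro enn_powr_cmult) auto
        also have "enn_powr (enn_powr (T r) (1/qr)) qr = T r"
          using enn_powr_inv[of "1/qr" "T r"] q1 by simp
        finally show ?thesis using True by (simp add: B_def)
      qed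
      have claim3: "(\<integral>\<^sup>+ r. B r \<partial>mu2) \<le> ennreal K0 * (\<integral>\<^sup>+ r. T r \<partial>lborel)"
      proof -
        have "(\<integral>\<^sup>+ r. B r \<partial>mu2) = (\<integral>\<^sup>+ r. (ennreal r * indicator {0<..} r) * B r \<partial>lborel)"
          unfolding mu2_def by (rule nn_integral_density) auto
        also have "\<dots> \<le> (\<integral>\<^sup>+ r. ennreal K0 * T r \<partial>lborel)"
        proof (rule nn_integral_mono)
          fix r :: real
          show "(ennreal r * indicator {0<..} r) * B r \<le> ennreal K0 * T r"
          proof (cases "2 \<le> r")
            case False then show ?thesis by (simp add: B_def)
          next
            case True
            define sx where "sx = qr / pr"
            have sx1: "1 \<le> sx" using p1 pq by (simp add: sx_def)
            have "((2/r) powr P * Wr) powr qr = (2/r) powr sx * Wr powr qr"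
              using True Wr0 p1 by (simp add: powr_mult powr_powr P_def sx_def)
            also have "(2/r) powr sx = 2 powr sx / r powr sx"
              using True by (simp add: powr_divide)
            finally have X: "((2/r) powr P * Wr) powr qr = 2 powr sx / r powr sx * Wr powr qr" .
            have "r powr 1 \<le> r powr sx" using True sx1 by (intro powr_mono) auto
            then have rr: "r \<le> r powr sx" using True by simp
            have rpos: "0 < r powr sx" using True by simp
            have "r * (2 powr sx / r powr sx) \<le> 2 powr sx"
              using rr rpos by (simp add: field_simps)
            then have "r * (((2/r) powr P * Wr) powr qr) \<le> K0"
              unfolding X K0_def sx_def[symmetric]
              by (metis (no_types, lifting) mult.assoc mult_right_mono powr_ge_zero)
            then have le: "ennreal r * ennreal (((2/r) powr P * Wr) powr qr) \<le> ennreal K0"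
              using True by (simp add: ennreal_mult[symmetric] ennreal_leI)
            have "(ennreal r * indicator {0<..} r) * B r = (ennreal r * ennreal (((2/r) powr P * Wr) powr qr)) * T r"
              using True by (simp add: B_def mult.assoc)
            also have "\<dots> \<le> ennreal K0 * T r" by (intro mult_right_mono le) auto
            finally show ?thesis .
          qed
        qed
        also have "\<dots> = ennreal K0 * (\<integral>\<^sup>+ r. T r \<partial>lborel)"
          by (rule nn_integral_cmult) simp
        finally show ?thesis .
      qed
      have claim4: "(\<integral>\<^sup>+ r. T r \<partial>lborel) \<le> ennreal Ks * ennreal (a powr (qr/pr))"
      proof -
        define G where "G j = (\<integral>\<^sup>+ x. enn_powr (gF F x (rho j)) qr \<partial>lborel)" for j
        have Gb: "G j \<le> ennreal ((2 * rho j) powr e * a powr (qr/pr))" for j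
          unfolding G_def gF_def e_def
          by (rule g_Lq_bound[OF Fm F0 p1 pq _ a0]) (auto simp: rho_def Apa[symmetric] Ap_def)
        have "(\<integral>\<^sup>+ r. T r \<partial>lborel) = (\<Sum>j. \<integral>\<^sup>+ r. ennreal (cj j) * (\<Sum>i<N j. enn_powr (gF F (r - \<sigma> * A j i) (rho j)) qr) \<partial>lborel)"
          unfolding T_def by (rule nn_integral_suminf) measurable
        also have "\<dots> = (\<Sum>j. ennreal (cj j) * (of_nat (N j) * G j))"
        proof (rule suminf_cong)
          fix j
          have "(\<integral>\<^sup>+ r. ennreal (cj j) * (\<Sum>i<N j. enn_powr (gF F (r - \<sigma> * A j i) (rho j)) qr) \<partial>lborel)
              = ennreal (cj j) * (\<integral>\<^sup>+ r. (\<Sum>i<N j. enn_powr (gF F (r - \<sigma> * A j i) (rho j)) qr) \<partial>lborel)"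
            by (rule nn_integral_cmult) measurable
          also have "(\<integral>\<^sup>+ r. (\<Sum>i<N j. enn_powr (gF F (r - \<sigma> * A j i) (rho j)) qr) \<partial>lborel)
              = (\<Sum>i<N j. \<integral>\<^sup>+ r. enn_powr (gF F (r - \<sigma> * A j i) (rho j)) qr \<partial>lborel)"
            by (rule nn_integral_sum) measurable
          also have "\<dots> = (\<Sum>i<N j. G j)"
          proof (rule sum.cong[OF refl])
            fix i
            show "(\<integral>\<^sup>+ r. enn_powr (gF F (r - \<sigma> * A j i) (rho j)) qr \<partial>lborel) = G j"
              unfolding G_def
              by (rule nn_integral_shift[of "\<lambda>x. enn_powr (gF F x (rho j)) qr"]) measurable
          qed
          also have "\<dots> = of_nat (N j) * G j" by simp
          finally show "(\<integral>\<^sup>+ r. ennreal (cj j) * (\<Sum>i<N j. enn_powr (gF F (r - \<sigma> * A j i) (rho j)) qr) \<partial>lborel)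
              = ennreal (cj j) * (of_nat (N j) * G j)" .
        qed
        also have "\<dots> \<le> ennreal (Kc * a powr (qr/pr) / (1 - \<theta>))"
        proof (rule geom_bound[OF \<theta>1(2) \<theta>1(1)])
          show "0 \<le> Kc * a powr (qr/pr)" using Kc0 by simp
        next
          fix j
          have ident: "cj j * del j powr (-\<alpha>0) * (2 * rho j) powr e = 2 powr (\<alpha>0 + 2*e) * \<theta>^j"
          proof -
            have "cj j * del j powr (-\<alpha>0) * (2 * rho j) powr e
                = 2 powr ((1/2 + \<epsilon>) * real j * qr + \<alpha>0 * (real j + 1) + e * (2 - real j))"
              by (simp add: cj_def del_powr rho2_powr powr_add)
            also have "\<dots> = 2 powr ((\<alpha>0 + 2*e) + (qr * (1/2 + \<epsilon>) + \<alpha>0 - e) * real j)"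
              by (simp add: algebra_simps)
            also have "\<dots> = 2 powr (\<alpha>0 + 2*e) * \<theta>^j"
              by (simp add: \<theta>_def pow2 powr_add)
            finally show ?thesis .
          qed
          have "ennreal (cj j) * (of_nat (N j) * G j)
              \<le> ennreal (cj j) * (ennreal (real (N j)) * ennreal ((2 * rho j) powr e * a powr (qr/pr)))"
            by (intro mult_left_mono) (auto simp: ennreal_of_nat_eq_real_of_nat intro!: mult_left_mono Gb)
          also have "\<dots> = ennreal (cj j * real (N j) * ((2 * rho j) powr e * a powr (qr/pr)))"
            by (simp add: ennreal_mult cj_def mult.assoc)
          also have "\<dots> \<le> ennreal (cj j * (cc * del j powr (-\<alpha>0)) * ((2 * rho j) powr e * a powr (qr/pr)))"
            by (intro ennreal_leI mult_right_mono mult_left_mono Nb) (auto simp: cj_def)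
          also have "cj j * (cc * del j powr (-\<alpha>0)) * ((2 * rho j) powr e * a powr (qr/pr))
              = cc * a powr (qr/pr) * (cj j * del j powr (-\<alpha>0) * (2 * rho j) powr e)"
            by (simp add: mult_ac)
          also have "\<dots> = Kc * a powr (qr/pr) * \<theta>^j"
            unfolding ident by (simp add: Kc_def mult_ac)
          finally show "ennreal (cj j) * (of_nat (N j) * G j) \<le> ennreal (Kc * a powr (qr/pr) * \<theta>^j)" .
        qed
        also have "\<dots> = ennreal Ks * ennreal (a powr (qr/pr))"
          using Ks0 by (simp add: Ks_def ennreal_mult[symmetric] field_simps)
        finally show ?thesis .
      qed
      have "(\<integral>\<^sup>+ r. enn_powr (Rop \<sigma> E f r) qr \<partial>mu2) \<le> (\<integral>\<^sup>+ r. B r \<partial>mu2)"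
        by (intro nn_integral_mono claim2)
      also have "\<dots> \<le> ennreal K0 * (ennreal Ks * ennreal (a powr (qr/pr)))"
        using claim3 claim4 by (meson dual_order.trans mult_left_mono zero_le)
      also have "\<dots> = ennreal (K0 * Ks * a powr (qr/pr))"
        using K00 Ks0 by (simp add: ennreal_mult mult.assoc)
      finally have int_le: "(\<integral>\<^sup>+ r. enn_powr (Rop \<sigma> E f r) qr \<partial>mu2) \<le> ennreal (K0 * Ks * a powr (qr/pr))" .
      have "Lp_norm mu2 (ennreal qr) (Rop \<sigma> E f) = enn_powr (\<integral>\<^sup>+ r. enn_powr (Rop \<sigma> E f r) qr \<partial>mu2) (1/qr)"
        using q1 by (simp add: Lp_fin)
      also have "\<dots> \<le> enn_powr (ennreal (K0 * Ks * a powr (qr/pr))) (1/qr)"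
        using q1 int_le by (intro enn_powr_mono) auto
      also have "\<dots> = ennreal ((K0 * Ks) powr (1/qr) * a powr (1/pr))"
        using K00 Ks0 a0 q1 p1 by (simp add: enn_powr_ennreal powr_mult powr_powr)
      also have "\<dots> \<le> ennreal (C * a powr (1/pr))"
        by (intro ennreal_leI mult_right_mono) (auto simp: C_def)
      also have "\<dots> = ennreal C * Lp_norm mu2 (ennreal pr) (\<lambda>s. ennreal \<bar>f s\<bar>)"
        using C0 a0 by (simp add: RHS Apa enn_powr_ennreal ennreal_mult)
      finally show ?thesis .
    qed
  qed
qed

lemma Lp_inf: "Lp_norm M top g = esssup M g"
  by (simp add: Lp_norm_def)

lemma esssup_Rop_le:
  assumes fm[measurable]: "f \<in> borel_measurable borel" and le: "\<And>r. Rop \<sigma> E f r \<le> c"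
  shows "Lp_norm mu2 top (Rop \<sigma> E f) \<le> c"
proof -
  have "Rop \<sigma> E f \<in> borel_measurable mu2" using Rop_meas[OF fm] by (simp add: mu2_def)
  then show ?thesis unfolding Lp_inf by (rule esssup_I) (use le in auto)
qed

lemma Rop_pointwise:
  fixes f :: "real \<Rightarrow> real"
  assumes fm[measurable]: "f \<in> borel_measurable borel" and \<sigma>: "\<sigma> = 1 \<or> \<sigma> = -1" and E: "E \<subseteq> {1..2}"
    and P0: "0 \<le> P"
    and gb: "\<And>x j. gF (Fw P f) x (rho j) \<le> ennreal (M j)"
    and M0: "\<And>j. 0 \<le> M j"
    and sb: "(\<Sum>j. ennreal (2 powr (real j/2) * M j)) \<le> ennreal c"
  shows "Rop \<sigma> E f r \<le> ennreal c"
proof (cases "2 \<le> r")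
  case False then show ?thesis by (simp add: Rop_def)
next
  case True
  have "(SUP t\<in>{t\<in>E. t \<le> r / 2}. Phi \<sigma> f r t) \<le> ennreal c"
  proof (rule SUP_least)
    fix t assume t: "t \<in> {t\<in>E. t \<le> r / 2}"
    have t12: "1 \<le> t" "t \<le> 2" using t E by auto
    have "Phi \<sigma> f r t \<le> ennreal ((2/r) powr P) *
           (\<Sum>j. ennreal (2 powr (real j/2)) * gF (Fw P f) (r - \<sigma> * t) (rho j))"
      by (rule Dec[OF fm \<sigma>]) (use t12 t True P0 in \<open>auto simp: del_def\<close>)
    also have "\<dots> \<le> 1 * (\<Sum>j. ennreal (2 powr (real j/2) * M j))"
    proof (rule mult_mono)
      show "ennreal ((2/r) powr P) \<le> 1"
        using True P0 powr_mono2[of P "2/r" 1] by simp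
      show "(\<Sum>j. ennreal (2 powr (real j/2)) * gF (Fw P f) (r - \<sigma> * t) (rho j)) \<le> (\<Sum>j. ennreal (2 powr (real j/2) * M j))"
        by (intro suminf_le summableI) (auto simp: ennreal_mult M0 intro!: mult_left_mono gb)
    qed auto
    also have "\<dots> \<le> ennreal c" using sb by simp
    finally show "Phi \<sigma> f r t \<le> ennreal c" .
  qed
  then show ?thesis using True by (simp add: Rop_def)
qed

lemma case_inf_inf:
  assumes \<sigma>: "\<sigma> = 1 \<or> \<sigma> = -1" and E: "E \<subseteq> {1..2}"
  shows "\<exists>C>0. \<forall>f. f \<in> borel_measurable borel \<longrightarrow>
           Lp_norm mu2 top (Rop \<sigma> E f) \<le> ennreal C * Lp_norm mu2 top (\<lambda>s. ennreal \<bar>f s\<bar>)"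
proof -
  define \<theta> :: real where "\<theta> = 2 powr (-1/2)"
  have \<theta>1: "0 \<le> \<theta>" "\<theta> < 1" using powr_less_mono[of "-1/2" 0 2] by (auto simp: \<theta>_def)
  define C where "C = 4 / (1 - \<theta>) + 1"
  have C0: "0 < C" using \<theta>1 by (simp add: C_def add_nonneg_pos)
  show ?thesis
  proof (intro exI[of _ C] conjI allI impI C0)
    fix f :: "real \<Rightarrow> real" assume fm[measurable]: "f \<in> borel_measurable borel"
    define Mf where "Mf = esssup mu2 (\<lambda>s. ennreal \<bar>f s\<bar>)"
    show "Lp_norm mu2 top (Rop \<sigma> E f) \<le> ennreal C * Lp_norm mu2 top (\<lambda>s. ennreal \<bar>f s\<bar>)"
    proof (cases "Mf = top")
      case True
      then show ?thesis using C0 by (simp add: Lp_inf Mf_def[symmetric] ennreal_mult_top)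
    next
      case False
      then obtain m where Mm: "Mf = ennreal m" and m0: "0 \<le> m" by (cases Mf) auto
      have "AE s in mu2. ennreal \<bar>f s\<bar> \<le> Mf" unfolding Mf_def by (rule esssup_AE)
      then have "AE s in lborel. 0 < ennreal s * indicator {0<..} s \<longrightarrow> ennreal \<bar>f s\<bar> \<le> ennreal m"
        unfolding mu2_def Mm by (subst (asm) AE_density) auto
      then have ae: "AE s in lborel. Fw 0 f s \<le> m"
      proof (rule eventually_mono)
        fix s :: real
        assume h: "0 < ennreal s * indicator {0<..} s \<longrightarrow> ennreal \<bar>f s\<bar> \<le> ennreal m"
        show "Fw 0 f s \<le> m"
        proof (cases "0 < s")
          case True then show ?thesis using h m0 by (simp add: Fw_def)
        next
          case False then show ?thesis using m0 by (simp add: Fw_def)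
        qed
      qed
      have gb: "gF (Fw 0 f) x (rho j) \<le> ennreal (2 * rho j * m)" for x j
      proof -
        have "gF (Fw 0 f) x (rho j) \<le> (\<integral>\<^sup>+ s. ennreal m * indicator {x - rho j .. x + rho j} s \<partial>lborel)"
          unfolding gF_def
          by (rule nn_integral_mono_AE) (use ae in \<open>auto elim!: eventually_mono simp: indicator_def intro: ennreal_leI\<close>)
        also have "\<dots> = ennreal m * emeasure lborel {x - rho j .. x + rho j}"
          by (rule nn_integral_cmult_indicator) simp
        also have "\<dots> = ennreal m * ennreal (2 * rho j)"
          by (simp add: rho_def)
        also have "\<dots> = ennreal (2 * rho j * m)"
          using m0 by (simp add: rho_def ennreal_mult[symmetric] mult_ac)
        finally show ?thesis .
      qed
      have sb: "(\<Sum>j. ennreal (2 powr (real j/2) * (2 * rho j * m))) \<le> ennreal (4 * m / (1 - \<theta>))"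
      proof (rule geom_bound[OF \<theta>1])
        fix j
        have "2 powr (real j/2) * (1/2)^j = \<theta>^j"
          by (simp add: half_pow \<theta>_def pow2 powr_add[symmetric])
        then show "ennreal (2 powr (real j/2) * (2 * rho j * m)) \<le> ennreal (4 * m * \<theta>^j)"
          by (intro ennreal_leI) (simp add: rho_def mult_ac)
      qed (use m0 in auto)
      have "Lp_norm mu2 top (Rop \<sigma> E f) \<le> ennreal (4 * m / (1 - \<theta>))"
        by (rule esssup_Rop_le[OF fm Rop_pointwise[OF fm \<sigma> E _ gb _ sb]]) (use m0 in \<open>auto simp: rho_def\<close>)
      also have "\<dots> \<le> ennreal (C * m)"
      proof (intro ennreal_leI)
        have "C * m = 4 * m / (1 - \<theta>) + m" by (simp add: C_def distrib_right)
        then show "4 * m / (1 - \<theta>) \<le> C * m" using m0 by simp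
      qed
      also have "\<dots> = ennreal C * Lp_norm mu2 top (\<lambda>s. ennreal \<bar>f s\<bar>)"
        using C0 m0 by (simp add: Lp_inf Mf_def[symmetric] Mm ennreal_mult)
      finally show ?thesis .
    qed
  qed
qed

lemma case_inf_fin:
  fixes pr :: real
  assumes \<sigma>: "\<sigma> = 1 \<or> \<sigma> = -1" and E: "E \<subseteq> {1..2}" and p2: "2 < pr"
  shows "\<exists>C>0. \<forall>f. f \<in> borel_measurable borel \<longrightarrow>
           Lp_norm mu2 top (Rop \<sigma> E f) \<le> ennreal C * Lp_norm mu2 (ennreal pr) (\<lambda>s. ennreal \<bar>f s\<bar>)"
proof -
  define \<theta> :: real where "\<theta> = 2 powr (1/pr - 1/2)"
  have \<theta>1: "0 \<le> \<theta>" "\<theta> < 1" using powr_less_mono[of "1/pr - 1/2" 0 2] p2 by (auto simp: \<theta>_def)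
  define K :: real where "K = 2 powr (2 * (pr - 1) / pr)"
  define C where "C = K / (1 - \<theta>) + 1"
  have C0: "0 < C" using \<theta>1 by (simp add: C_def K_def add_nonneg_pos)
  define P where "P = 1 / pr"
  have p1: "1 \<le> pr" using p2 by simp
  show ?thesis
  proof (intro exI[of _ C] conjI allI impI C0)
    fix f :: "real \<Rightarrow> real" assume fm[measurable]: "f \<in> borel_measurable borel"
    define F where "F = Fw P f"
    have Fm[measurable]: "F \<in> borel_measurable borel" by (simp add: F_def)
    have F0: "\<And>s. 0 \<le> F s" by (simp add: F_def Fw_nonneg)
    define Ap where "Ap = (\<integral>\<^sup>+ s. ennreal (F s powr pr) \<partial>lborel)"
    have RHS: "Lp_norm mu2 (ennreal pr) (\<lambda>s. ennreal \<bar>f s\<bar>) = enn_powr Ap (1/pr)"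
      using p1 by (simp add: Lp_fin Ap_eq Ap_def F_def P_def)
    show "Lp_norm mu2 top (Rop \<sigma> E f) \<le> ennreal C * Lp_norm mu2 (ennreal pr) (\<lambda>s. ennreal \<bar>f s\<bar>)"
    proof (cases "Ap = top")
      case True
      then show ?thesis using C0 by (simp add: RHS ennreal_mult_top)
    next
      case False
      then obtain a where Apa: "Ap = ennreal a" and a0: "0 \<le> a" by (cases Ap) auto
      define M where "M j = ((2 * rho j) powr (pr - 1) * a) powr (1/pr)" for j
      have M0: "0 \<le> M j" for j by (simp add: M_def)
      have gb: "gF F x (rho j) \<le> ennreal (M j)" for x j
      proof -
        have rj: "0 < rho j" by (simp add: rho_def)
        have HA: "(\<integral>\<^sup>+ s. ennreal (indicator {x - rho j..x + rho j} s * F s powr pr) \<partial>lborel) \<le> ennreal a"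
          unfolding Apa[symmetric] Ap_def by (intro nn_integral_mono) (auto simp: indicator_def)
        then have Hfin: "(\<integral>\<^sup>+ s. ennreal (indicator {x - rho j..x + rho j} s * F s powr pr) \<partial>lborel) < \<infinity>"
          by (metis ennreal_less_top infinity_ennreal_def order.strict_trans1)
        note J = jensen_interval[OF Fm F0 p1 rj Hfin]
        define G where "G = (\<integral>\<^sup>+ s. ennreal (indicator {x - rho j..x + rho j} s * F s) \<partial>lborel)"
        define H where "H = (\<integral>\<^sup>+ s. ennreal (indicator {x - rho j..x + rho j} s * F s powr pr) \<partial>lborel)"
        have G\<gamma>: "G = ennreal (enn2real G)" "0 \<le> enn2real G" using J(1) by (auto simp: G_def less_top)
        have hA: "enn2real H \<le> a" using HA a0 by (simp add: H_def[symmetric] enn2real_leI)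
        have "enn2real G powr pr \<le> (2 * rho j) powr (pr - 1) * enn2real H"
          using J(2) by (simp add: G_def H_def)
        also have "\<dots> \<le> (2 * rho j) powr (pr - 1) * a" using hA by (intro mult_left_mono) auto
        finally have "(enn2real G powr pr) powr (1/pr) \<le> ((2 * rho j) powr (pr - 1) * a) powr (1/pr)"
          using p1 by (intro powr_mono2) auto
        then have "enn2real G \<le> M j" using G\<gamma>(2) p1 by (simp add: powr_powr M_def)
        then have "G \<le> ennreal (M j)" using G\<gamma> by (metis ennreal_leI)
        then show ?thesis by (simp add: G_def gF_def)
      qed
      have sb: "(\<Sum>j. ennreal (2 powr (real j/2) * M j)) \<le> ennreal (K * a powr (1/pr) / (1 - \<theta>))"
      proof (rule geom_bound[OF \<theta>1])
        fix j
        have "2 powr (real j/2) * M j = 2 powr (real j/2) * (2 powr ((pr - 1) * (2 - real j) / pr) * a powr (1/pr))"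
        proof -
          have "M j = (2 powr ((pr - 1) * (2 - real j)) * a) powr (1/pr)"
            unfolding M_def rho2_powr by simp
          also have "\<dots> = (2 powr ((pr - 1) * (2 - real j))) powr (1/pr) * a powr (1/pr)"
            using a0 by (intro powr_mult)
          also have "(2 powr ((pr - 1) * (2 - real j))) powr (1/pr) = 2 powr ((pr - 1) * (2 - real j) / pr)"
            by (simp add: powr_powr)
          finally show ?thesis by simp
        qed
        also have "\<dots> = 2 powr (real j/2 + (pr - 1) * (2 - real j) / pr) * a powr (1/pr)"
          by (simp add: powr_add)
        also have "real j/2 + (pr - 1) * (2 - real j) / pr = 2 * (pr - 1) / pr + (1/pr - 1/2) * real j"
          using p1 by (simp add: field_simps)
        also have "2 powr (2 * (pr - 1) / pr + (1/pr - 1/2) * real j) = K * \<theta>^j"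
          by (simp add: K_def \<theta>_def pow2 powr_add)
        finally show "ennreal (2 powr (real j/2) * M j) \<le> ennreal (K * a powr (1/pr) * \<theta>^j)"
          by (simp add: mult_ac)
      qed (simp add: K_def)
      have "Lp_norm mu2 top (Rop \<sigma> E f) \<le> ennreal (K * a powr (1/pr) / (1 - \<theta>))"
        by (rule esssup_Rop_le[OF fm Rop_pointwise[OF fm \<sigma> E _ gb[unfolded F_def] M0 sb]]) (use p1 in \<open>simp add: P_def\<close>)
      also have "\<dots> \<le> ennreal (C * a powr (1/pr))"
      proof (intro ennreal_leI)
        have "C * a powr (1/pr) = K * a powr (1/pr) / (1 - \<theta>) + a powr (1/pr)" by (simp add: C_def distrib_right)
        then show "K * a powr (1/pr) / (1 - \<theta>) \<le> C * a powr (1/pr)" by simp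
      qed
      also have "\<dots> = ennreal C * Lp_norm mu2 (ennreal pr) (\<lambda>s. ennreal \<bar>f s\<bar>)"
        using C0 a0 by (simp add: RHS Apa enn_powr_ennreal ennreal_mult)
      finally show ?thesis .
    qed
  qed
qed

lemma main_sigma:
  fixes E :: "real set" and \<beta> :: real and p q :: ennreal
  assumes E: "E \<subseteq> {1..2}" and \<sigma>: "\<sigma> = 1 \<or> \<sigma> = -1"
    and \<beta>: "minkowski_dim E = \<beta>"
    and p1: "1 \<le> p" and pq: "p \<le> q"
    and cond: "recip_exp p - (1 - \<beta>) * recip_exp q - 1/2 < 0"
  shows "\<exists>C>0. \<forall>f. f \<in> borel_measurable borel \<longrightarrow>
           Lp_norm mu2 q (Rop \<sigma> E f) \<le> ennreal C * Lp_norm mu2 p (\<lambda>s. ennreal \<bar>f s\<bar>)"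
proof (cases "q = top")
  case qT: True
  show ?thesis
  proof (cases "p = top")
    case True
    then show ?thesis using qT case_inf_inf[OF \<sigma> E] by simp
  next
    case False
    then obtain pr where ppr: "p = ennreal pr" and pr0: "0 \<le> pr" by (cases p) auto
    have pr1: "1 \<le> pr" using p1 ppr by (metis ennreal_1 ennreal_le_iff pr0)
    have "1/pr - 1/2 < 0" using cond qT ppr pr0 by (simp add: recip_exp_def)
    then have "2 < pr" using pr1 by (simp add: field_simps)
    then show ?thesis using case_inf_fin[OF \<sigma> E] qT ppr by simp
  qed
next
  case qF: False
  then obtain qr where qqr: "q = ennreal qr" and qr0: "0 \<le> qr" by (cases q) auto
  have pF: "p \<noteq> top" using pq qF by (auto simp: top_unique)
  then obtain pr where ppr: "p = ennreal pr" and pr0: "0 \<le> pr" by (cases p) auto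
  have pr1: "1 \<le> pr" using p1 ppr by (metis ennreal_1 ennreal_le_iff pr0)
  have prq: "pr \<le> qr" using pq ppr qqr qr0 by (simp add: ennreal_le_iff)
  have condr: "1/pr - (1-\<beta>)/qr - 1/2 < 0" using cond ppr qqr pr0 qr0 by (simp add: recip_exp_def)
  define \<eta> where "\<eta> = - (1/pr - (1-\<beta>)/qr - 1/2)"
  have \<eta>0: "0 < \<eta>" using condr by (simp add: \<eta>_def)
  have q1: "1 \<le> qr" using pr1 prq by simp
  obtain \<alpha>0 cc where a0: "0 < \<alpha>0" and az: "\<alpha>0 < \<beta> + \<eta> * qr / 2"
    and cb: "\<forall>\<delta>\<in>{0<..<1}. real (cover_num E \<delta>) \<le> cc * \<delta> powr (-\<alpha>0)"
    using mdim_witness[OF E, of "\<beta> + \<eta> * qr / 2"] \<beta> \<eta>0 q1 by auto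
  have conda: "1/pr - (1-\<alpha>0)/qr - 1/2 < 0"
  proof -
    have "(\<alpha>0 - \<beta>) / qr < \<eta> / 2" using az q1 by (simp add: field_simps)
    moreover have "1/pr - (1-\<alpha>0)/qr - 1/2 = -\<eta> + (\<alpha>0 - \<beta>) / qr"
      using q1 by (simp add: \<eta>_def field_simps)
    ultimately show ?thesis using \<eta>0 by linarith
  qed
  have "\<forall>j. \<exists>a::nat \<Rightarrow> real. E \<subseteq> (\<Union>i<cover_num E (del j). {a i .. a i + del j})"
    using cover_num_spec[OF E] by (simp add: del_def)
  then obtain A where A: "\<And>j. E \<subseteq> (\<Union>i<cover_num E (del j). {A j i .. A j i + del j})" by metis
  have Nb: "real (cover_num E (del j)) \<le> cc * (del j) powr (-\<alpha>0)" for j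
  proof -
    have "(1/2::real)^j \<le> 1" by (simp add: power_le_one)
    then have "del j \<in> {0<..<1}" by (simp add: del_def)
    then show ?thesis using cb by blast
  qed
  show ?thesis using case_fin[OF \<sigma> E pr1 prq conda A Nb] ppr qqr by simp
qed

theorem proposition3p6:
  fixes E :: "real set" and \<beta> :: real and p q :: ennreal
  assumes "E \<subseteq> {1..2}"
    and "minkowski_dim E = \<beta>"
    and "1 \<le> p" and "p \<le> q"
    and "recip_exp p - (1 - \<beta>) * recip_exp q - 1/2 < 0"
  shows "\<exists>C::real. \<forall>f0 :: real \<Rightarrow> real. f0 \<in> borel_measurable borel \<longrightarrow>
           Lp_norm mu2 q (R1 E f0) \<le> ennreal C * Lp_norm mu2 p (\<lambda>s. ennreal \<bar>f0 s\<bar>) \<and>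
           Lp_norm mu2 q (R2 E f0) \<le> ennreal C * Lp_norm mu2 p (\<lambda>s. ennreal \<bar>f0 s\<bar>)"
proof -
  obtain C1 where C1: "C1 > 0" "\<forall>f. f \<in> borel_measurable borel \<longrightarrow>
           Lp_norm mu2 q (Rop 1 E f) \<le> ennreal C1 * Lp_norm mu2 p (\<lambda>s. ennreal \<bar>f s\<bar>)"
    using main_sigma[OF assms(1) _ assms(2-5), of 1] by auto
  obtain C2 where C2: "C2 > 0" "\<forall>f. f \<in> borel_measurable borel \<longrightarrow>
           Lp_norm mu2 q (Rop (-1) E f) \<le> ennreal C2 * Lp_norm mu2 p (\<lambda>s. ennreal \<bar>f s\<bar>)"
    using main_sigma[OF assms(1) _ assms(2-5), of "-1"] by auto
  show ?thesis
  proof (intro exI[of _ "max C1 C2"] allI impI conjI)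
    fix f0 :: "real \<Rightarrow> real" assume fm: "f0 \<in> borel_measurable borel"
    have m1: "ennreal C1 * X \<le> ennreal (max C1 C2) * X" and m2: "ennreal C2 * X \<le> ennreal (max C1 C2) * X" for X
      by (intro mult_right_mono ennreal_leI; simp)+
    show "Lp_norm mu2 q (R1 E f0) \<le> ennreal (max C1 C2) * Lp_norm mu2 p (\<lambda>s. ennreal \<bar>f0 s\<bar>)"
      unfolding R1_eq using C1(2) fm m1 order_trans by blast
    show "Lp_norm mu2 q (R2 E f0) \<le> ennreal (max C1 C2) * Lp_norm mu2 p (\<lambda>s. ennreal \<bar>f0 s\<bar>)"
      unfolding R2_eq using C2(2) fm m2 order_trans by blast
  qed
qed

end
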